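(* Let $p$ be a prime, $e\ge1$, and $G$ a finite abelian group of order $p^e$. Let $\psi^p\colon\mathbf{Z}[G]\to\mathbf{Z}[G]$ be the ring homomorphism with $\psi^p(g)=g^p$. If $\rho$ is a chosen representative of level $k>0$, then $$\psi^p(b_\rho)=\sum_{\tau:\ \psi\tau=\rho}p\,b_\tau,$$ where the sum runs over the chosen representatives $\tau$ with $\psi\tau=\rho$ (equivalently, over the equivalence classes of representations $\tau$ with $\psi\tau=\rho$).
   Context: A representation is a group homomorphism $\rho\colon G\to\mathbf{C}^*$; its level is $k$ if $\rho(G)$ has $p^k$ elements. Two representations are equivalent if they have the same kernel. For a representation $\tau$ of level $k>0$, $\psi\tau$ is the representation $x\mapsto\tau(x^p)$ (of level $k-1$). A representative is chosen in each equivalence class in such a way that, for chosen representatives $\tau,\rho$, if $\psi\tau$ is equivalent to $\rho$ then $\psi\tau=\rho$ (such a choice exists). Write $\omega=\exp(2\pi i/p)$. For $\rho$ of level $k>0$ set $b_\rho=\sum_{x\in G,\ \rho(x)=1}x-\sum_{\xi\in G,\ \rho(\xi)=\omega}\xi\in\mathbf{Z}[G]$. *)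

theory Defs
  imports "HOL-Algebra.Group" "HOL-Computational_Algebra.Primes" Complex_Main
begin

text \<open>One-dimensional complex representations (characters) of G, as functions on the carrier
  (extensional, i.e. undefined outside the carrier).\<close>
definition rep :: "('a, 'b) monoid_scheme \<Rightarrow> ('a \<Rightarrow> complex) \<Rightarrow> bool" where
  "rep G \<rho> \<longleftrightarrow> \<rho> \<in> extensional (carrier G) \<and>
     (\<forall>x\<in>carrier G. \<rho> x \<noteq> 0) \<and>
     (\<forall>x\<in>carrier G. \<forall>y\<in>carrier G. \<rho> (x \<otimes>\<^bsub>G\<^esub> y) = \<rho> x * \<rho> y)"

definition level :: "('a, 'b) monoid_scheme \<Rightarrow> nat \<Rightarrow> ('a \<Rightarrow> complex) \<Rightarrow> nat" where
  "level G p \<rho> = (THE k. card (\<rho> ` carrier G) = p ^ k)"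

definition rker :: "('a, 'b) monoid_scheme \<Rightarrow> ('a \<Rightarrow> complex) \<Rightarrow> 'a set" where
  "rker G \<rho> = {x \<in> carrier G. \<rho> x = 1}"

definition rep_equiv :: "('a, 'b) monoid_scheme \<Rightarrow> ('a \<Rightarrow> complex) \<Rightarrow> ('a \<Rightarrow> complex) \<Rightarrow> bool" where
  "rep_equiv G \<rho> \<sigma> \<longleftrightarrow> rker G \<rho> = rker G \<sigma>"

definition psi_rep :: "('a, 'b) monoid_scheme \<Rightarrow> nat \<Rightarrow> ('a \<Rightarrow> complex) \<Rightarrow> ('a \<Rightarrow> complex)" where
  "psi_rep G p \<tau> = restrict (\<lambda>x. \<tau> (x [^]\<^bsub>G\<^esub> p)) (carrier G)"

definition chosen_reps :: "('a, 'b) monoid_scheme \<Rightarrow> nat \<Rightarrow> ('a \<Rightarrow> complex) set \<Rightarrow> bool" where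
  "chosen_reps G p R \<longleftrightarrow>
     R \<subseteq> {\<rho>. rep G \<rho>} \<and>
     (\<forall>\<sigma>. rep G \<sigma> \<longrightarrow> (\<exists>!\<tau>. \<tau> \<in> R \<and> rep_equiv G \<tau> \<sigma>)) \<and>
     (\<forall>\<tau>\<in>R. \<forall>\<rho>\<in>R. level G p \<tau> > 0 \<longrightarrow> rep_equiv G (psi_rep G p \<tau>) \<rho> \<longrightarrow> psi_rep G p \<tau> = \<rho>)"

text \<open>Elements of Z[G] are integer-valued functions on G supported on the carrier.\<close>
definition omega :: "nat \<Rightarrow> complex" where
  "omega p = exp (2 * pi * \<i> / of_nat p)"

definition b_elt :: "('a, 'b) monoid_scheme \<Rightarrow> nat \<Rightarrow> ('a \<Rightarrow> complex) \<Rightarrow> ('a \<Rightarrow> int)" where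
  "b_elt G p \<rho> = (\<lambda>x. if x \<in> carrier G then
      (if \<rho> x = 1 then 1 else 0) - (if \<rho> x = omega p then 1 else 0) else 0)"

text \<open>The ring endomorphism psi^p of Z[G], g \<mapsto> g^p, extended linearly.\<close>
definition psi_grp :: "('a, 'b) monoid_scheme \<Rightarrow> nat \<Rightarrow> ('a \<Rightarrow> int) \<Rightarrow> ('a \<Rightarrow> int)" where
  "psi_grp G p f = (\<lambda>h. \<Sum>g\<in>{g \<in> carrier G. g [^]\<^bsub>G\<^esub> p = h}. f g)"

end

theory Submission
  imports Defs "HOL-Algebra.Multiplicative_Group"
begin

definition hchar :: "('a, 'b) monoid_scheme \<Rightarrow> 'a set \<Rightarrow> ('a \<Rightarrow> complex) \<Rightarrow> bool" where
  "hchar G H \<chi> \<longleftrightarrow> \<chi> \<in> extensional H \<and> (\<forall>x\<in>H. \<chi> x \<noteq> 0) \<and>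
     (\<forall>x\<in>H. \<forall>y\<in>H. \<chi> (x \<otimes>\<^bsub>G\<^esub> y) = \<chi> x * \<chi> y)"

lemma rep_hchar: "rep G \<rho> = hchar G (carrier G) \<rho>" by (simp add: rep_def hchar_def)

definition Ext :: "('a, 'b) monoid_scheme \<Rightarrow> 'a set \<Rightarrow> ('a \<Rightarrow> complex) \<Rightarrow> ('a \<Rightarrow> complex) set" where
  "Ext G H \<chi> = {\<tau>. rep G \<tau> \<and> (\<forall>x\<in>H. \<tau> x = \<chi> x)}"

lemma card_fibers:
  assumes "finite A" "\<And>y. y \<in> f ` A \<Longrightarrow> card {x\<in>A. f x = y} = m"
  shows "card A = m * card (f ` A)"
proof -
  have "card A = (\<Sum>y\<in>f ` A. card {x\<in>A. f x = y})"
    using sum.image_gen[OF assms(1), of "\<lambda>_. 1::nat" f] by simp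
  also have "\<dots> = (\<Sum>y\<in>f ` A. m)" using assms(2) by simp
  finally show ?thesis by simp
qed

lemma root_coprime_one:
  fixes w :: complex
  assumes "w ^ d = 1" "w ^ q = 1" "coprime d q" "d \<noteq> 0"
  shows "w = 1"
proof -
  obtain x y where xy: "d * x = q * y + gcd d q" using bezout_nat[OF assms(4)] by blast
  have "w ^ (d * x) = 1" using assms(1) by (simp add: power_mult)
  moreover have "w ^ (d * x) = w ^ (q * y) * w" using xy assms(3) by (simp add: power_add)
  moreover have "w ^ (q * y) = 1" using assms(2) by (simp add: power_mult)
  ultimately show ?thesis by simp
qed

lemma pth_roots_powers:
  fixes w u :: complex
  assumes p: "prime p" and w: "w ^ p = 1" "w \<noteq> 1" and u: "u ^ p = 1"
  shows "\<exists>i. u = w ^ i"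
proof -
  have p0: "p > 0" using p prime_gt_0_nat by blast
  have w0: "w \<noteq> 0" using w p0 by (metis power_0_left zero_neq_one neq0_conv)
  have inj: "inj_on (\<lambda>i. w ^ i) {..<p}"
  proof (rule inj_onI)
    fix i j assume i: "i \<in> {..<p}" and j: "j \<in> {..<p}" and eq: "w ^ i = w ^ j"
    show "i = j"
    proof (rule ccontr)
      assume "i \<noteq> j"
      then consider "i < j" | "j < i" by linarith
      then show False
      proof cases
        case 1
        have "w ^ (i + (j - i)) = w ^ j" using 1 by simp
        then have "w ^ i * w ^ (j - i) = w ^ i * 1" using eq by (simp add: power_add)
        then have "w ^ (j - i) = 1" using w0 by simp
        moreover have "\<not> p dvd (j - i)" using 1 j by (auto dest: dvd_imp_le)
        then have "coprime (j - i) p" using prime_imp_coprime[OF p] coprime_commute by blast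
        ultimately show False using root_coprime_one[of w "j - i" p] w 1 by simp
      next
        case 2
        have "w ^ (j + (i - j)) = w ^ i" using 2 by simp
        then have "w ^ j * w ^ (i - j) = w ^ j * 1" using eq by (simp add: power_add)
        then have "w ^ (i - j) = 1" using w0 by simp
        moreover have "\<not> p dvd (i - j)" using 2 i by (auto dest: dvd_imp_le)
        then have "coprime (i - j) p" using prime_imp_coprime[OF p] coprime_commute by blast
        ultimately show False using root_coprime_one[of w "i - j" p] w 2 by simp
      qed
    qed
  qed
  have sub: "(\<lambda>i. w ^ i) ` {..<p} \<subseteq> {z. z ^ p = 1}"
  proof
    fix z assume "z \<in> (\<lambda>i. w ^ i) ` {..<p}"
    then obtain i where "z = w ^ i" by auto
    then have "z ^ p = (w ^ p) ^ i" by (simp add: power_mult[symmetric] mult.commute)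
    with w show "z \<in> {z. z ^ p = 1}" by simp
  qed
  have "card ((\<lambda>i. w ^ i) ` {..<p}) = card {z::complex. z ^ p = 1}"
    using card_image[OF inj] card_roots_unity_eq[OF p0] by simp
  then have "(\<lambda>i. w ^ i) ` {..<p} = {z. z ^ p = 1}"
    using sub by (intro card_subset_eq) (auto simp: finite_roots_unity p0)
  then have "u \<in> (\<lambda>i. w ^ i) ` {..<p}" using u by (simp only: mem_Collect_eq)
  then obtain i where "u = w ^ i" by (rule imageE)
  then show ?thesis by (rule exI)
qed

definition ordm :: "('a, 'b) monoid_scheme \<Rightarrow> 'a set \<Rightarrow> 'a \<Rightarrow> nat" where
  "ordm G H g = (LEAST m. 0 < m \<and> g [^]\<^bsub>G\<^esub> m \<in> H)"

definition Hg :: "('a, 'b) monoid_scheme \<Rightarrow> 'a set \<Rightarrow> 'a \<Rightarrow> 'a set" where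
  "Hg G H g = {a \<otimes>\<^bsub>G\<^esub> g [^]\<^bsub>G\<^esub> (i::nat) | a i. a \<in> H}"

definition extc :: "('a, 'b) monoid_scheme \<Rightarrow> 'a set \<Rightarrow> 'a \<Rightarrow> ('a \<Rightarrow> complex) \<Rightarrow> complex \<Rightarrow> 'a \<Rightarrow> complex" where
  "extc G H g \<chi> c = (\<lambda>y. if y \<in> Hg G H g then
     (SOME v. \<exists>a\<in>H. \<exists>i::nat. y = a \<otimes>\<^bsub>G\<^esub> g [^]\<^bsub>G\<^esub> i \<and> v = \<chi> a * c ^ i) else undefined)"

context comm_group
begin

lemma sub_pow_closed: "subgroup H G \<Longrightarrow> x \<in> H \<Longrightarrow> x [^] (n::nat) \<in> H"
  by (induction n) (auto simp: subgroup.m_closed subgroup.one_closed)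

lemma hchar_one: assumes "subgroup H G" "hchar G H \<chi>" shows "\<chi> \<one> = 1"
proof -
  have h1: "\<one> \<in> H" using assms(1) by (rule subgroup.one_closed)
  then have "\<chi> (\<one> \<otimes> \<one>) = \<chi> \<one> * \<chi> \<one>" using assms(2) unfolding hchar_def by blast
  then have "\<chi> \<one> * 1 = \<chi> \<one> * \<chi> \<one>" by simp
  moreover have "\<chi> \<one> \<noteq> 0" using h1 assms(2) by (auto simp: hchar_def)
  ultimately show ?thesis by (metis mult_left_cancel)
qed

lemma hchar_mult: "hchar G H \<chi> \<Longrightarrow> x \<in> H \<Longrightarrow> y \<in> H \<Longrightarrow> \<chi> (x \<otimes> y) = \<chi> x * \<chi> y"
  by (auto simp: hchar_def)

lemma hchar_nz: "hchar G H \<chi> \<Longrightarrow> x \<in> H \<Longrightarrow> \<chi> x \<noteq> 0"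
  by (auto simp: hchar_def)

lemma hchar_pow: assumes "subgroup H G" "hchar G H \<chi>" "x \<in> H" shows "\<chi> (x [^] (n::nat)) = \<chi> x ^ n"
proof (induction n)
  case 0 then show ?case using hchar_one[OF assms(1,2)] by simp
next
  case (Suc n)
  have "\<chi> (x [^] Suc n) = \<chi> (x [^] n \<otimes> x)" by simp
  also have "\<dots> = \<chi> (x [^] n) * \<chi> x" using hchar_mult[OF assms(2) sub_pow_closed[OF assms(1,3)] assms(3)] .
  finally show ?case using Suc by simp
qed

lemma hchar_inv: assumes "subgroup H G" "hchar G H \<chi>" "x \<in> H" shows "\<chi> (inv x) = inverse (\<chi> x)"
proof -
  have xi: "inv x \<in> H" by (rule subgroup.m_inv_closed[OF assms(1,3)])
  have xc: "x \<in> carrier G" by (rule subgroup.mem_carrier[OF assms(1,3)])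
  have "\<chi> (x \<otimes> inv x) = \<chi> x * \<chi> (inv x)" using hchar_mult[OF assms(2,3) xi] .
  then have "1 = \<chi> x * \<chi> (inv x)" using hchar_one[OF assms(1,2)] xc by simp
  then show ?thesis using hchar_nz[OF assms(2,3)] by (simp add: field_simps)
qed

lemma rep_root: assumes "rep G \<tau>" "x \<in> carrier G" shows "\<tau> x ^ order G = 1"
proof -
  have h: "hchar G (carrier G) \<tau>" using assms(1) rep_hchar by blast
  have "\<tau> (x [^] order G) = \<tau> x ^ order G" using hchar_pow[OF subgroup_self h assms(2)] .
  moreover have "x [^] order G = \<one>" using pow_order_eq_1[OF assms(2)] .
  ultimately show ?thesis using hchar_one[OF subgroup_self h] by simp
qed

lemma finite_reps: assumes "finite (carrier G)" shows "finite {\<tau>. rep G \<tau>}"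
proof -
  have o: "order G > 0" using assms one_closed unfolding order_def by (auto simp: card_gt_0_iff)
  have "{\<tau>. rep G \<tau>} \<subseteq> PiE (carrier G) (\<lambda>_. {z. z ^ order G = 1})"
    using rep_root by (auto simp: rep_def PiE_def Pi_def)
  moreover have "finite (PiE (carrier G) (\<lambda>_. {z::complex. z ^ order G = 1}))"
    using assms o by (intro finite_PiE) (auto intro: finite_roots_unity)
  ultimately show ?thesis by (rule finite_subset)
qed

end

context comm_group
begin

lemma ordm_props:
  assumes "finite (carrier G)" "subgroup H G" "g \<in> carrier G"
  shows "0 < ordm G H g" "g [^] ordm G H g \<in> H"
proof -
  have o: "order G > 0" using assms(1) one_closed unfolding order_def by (auto simp: card_gt_0_iff)
  have "0 < order G \<and> g [^] order G \<in> H"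
    using o pow_order_eq_1[OF assms(3)] subgroup.one_closed[OF assms(2)] by simp
  then have "0 < ordm G H g \<and> g [^] ordm G H g \<in> H"
    unfolding ordm_def by (rule LeastI)
  then show "0 < ordm G H g" "g [^] ordm G H g \<in> H" by auto
qed

lemma ordm_dvd:
  assumes "finite (carrier G)" "subgroup H G" "g \<in> carrier G" "g [^] (d::nat) \<in> H"
  shows "ordm G H g dvd d"
proof (rule ccontr)
  assume nd: "\<not> ordm G H g dvd d"
  define m where "m = ordm G H g"
  have m: "0 < m" "g [^] m \<in> H" using ordm_props[OF assms(1-3)] by (auto simp: m_def)
  define u where "u = (g [^] m) [^] (d div m)"
  have uH: "u \<in> H" unfolding u_def using sub_pow_closed[OF assms(2) m(2)] .
  have uc: "u \<in> carrier G" using uH subgroup.mem_carrier[OF assms(2)] by blast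
  have "g [^] d = g [^] (m * (d div m)) \<otimes> g [^] (d mod m)"
    using assms(3) by (simp add: nat_pow_mult)
  also have "g [^] (m * (d div m)) = u" unfolding u_def using assms(3) by (simp add: nat_pow_pow)
  finally have eq: "g [^] d = u \<otimes> g [^] (d mod m)" .
  have "g [^] (d mod m) = inv u \<otimes> g [^] d"
    using eq uc assms(3) by (simp add: inv_solve_left)
  moreover have "inv u \<otimes> g [^] d \<in> H"
    using uH assms(4) assms(2) by (simp add: subgroup.m_closed subgroup.m_inv_closed)
  ultimately have inH: "g [^] (d mod m) \<in> H" by simp
  have r0: "0 < d mod m" using nd m(1) unfolding m_def by (simp add: dvd_eq_mod_eq_0)
  have "d mod m < m" using m(1) by simp
  moreover have "\<not> d mod m < (LEAST m. 0 < m \<and> g [^] m \<in> H)"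
    using not_less_Least[of "d mod m" "\<lambda>m. 0 < m \<and> g [^] m \<in> H"] r0 inH by blast
  then have "\<not> d mod m < m" unfolding m_def ordm_def .
  ultimately show False by simp
qed

lemma Hg_basic:
  assumes "subgroup H G" "g \<in> carrier G"
  shows "H \<subseteq> Hg G H g" "g \<in> Hg G H g" "Hg G H g \<subseteq> carrier G"
proof -
  show "H \<subseteq> Hg G H g"
  proof
    fix x assume x: "x \<in> H"
    then have "x = x \<otimes> g [^] (0::nat)" using subgroup.mem_carrier[OF assms(1)] by simp
    then show "x \<in> Hg G H g" unfolding Hg_def using x by blast
  qed
  have "g = \<one> \<otimes> g [^] (1::nat)" using assms(2) by simp
  then show "g \<in> Hg G H g" unfolding Hg_def using subgroup.one_closed[OF assms(1)] by blast
  show "Hg G H g \<subseteq> carrier G" unfolding Hg_def using assms subgroup.mem_carrier[OF assms(1)] by auto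
qed

lemma Hg_subgroup:
  assumes "finite (carrier G)" "subgroup H G" "g \<in> carrier G"
  shows "subgroup (Hg G H g) G"
proof (rule subgroupI)
  show "Hg G H g \<subseteq> carrier G" using Hg_basic[OF assms(2,3)] by simp
  show "Hg G H g \<noteq> {}" using Hg_basic[OF assms(2,3)] by blast
  have hc: "\<And>a. a \<in> H \<Longrightarrow> a \<in> carrier G" using subgroup.mem_carrier[OF assms(2)] by blast
  fix a b assume a: "a \<in> Hg G H g" and b: "b \<in> Hg G H g"
  obtain a1 i where a1: "a1 \<in> H" "a = a1 \<otimes> g [^] (i::nat)" using a unfolding Hg_def by blast
  obtain b1 j where b1: "b1 \<in> H" "b = b1 \<otimes> g [^] (j::nat)" using b unfolding Hg_def by blast
  have "a \<otimes> b = (a1 \<otimes> b1) \<otimes> g [^] (i + j)"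
    using a1 b1 hc assms(3) by (simp add: m_ac nat_pow_mult[symmetric])
  moreover have "a1 \<otimes> b1 \<in> H" using a1 b1 assms(2) by (simp add: subgroup.m_closed)
  ultimately show "a \<otimes> b \<in> Hg G H g" unfolding Hg_def by blast
  have ig: "inv (g [^] i) = g [^] (i * (order G - 1))"
  proof (rule inv_equality)
    have o: "order G > 0" using assms(1) one_closed unfolding order_def by (auto simp: card_gt_0_iff)
    have "g [^] (i * (order G - 1)) \<otimes> g [^] i = g [^] (i * order G)"
      using assms(3) o by (simp add: nat_pow_mult algebra_simps)
    also have "\<dots> = (g [^] order G) [^] i" using assms(3) by (simp add: nat_pow_pow mult.commute)
    also have "\<dots> = \<one>" using pow_order_eq_1[OF assms(3)] by simp
    finally show "g [^] (i * (order G - 1)) \<otimes> g [^] i = \<one>" .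
  qed (use assms(3) in auto)
  have "inv a = inv a1 \<otimes> g [^] (i * (order G - 1))"
    using a1 hc assms(3) ig by (simp add: inv_mult)
  moreover have "inv a1 \<in> H" using a1 assms(2) by (simp add: subgroup.m_inv_closed)
  ultimately show "inv a \<in> Hg G H g" unfolding Hg_def by blast
qed

lemma Hg_repr:
  assumes "finite (carrier G)" "subgroup H G" "g \<in> carrier G"
    and "a \<in> H" "b \<in> H" "a \<otimes> g [^] (i::nat) = b \<otimes> g [^] (j::nat)" "i \<le> j"
  shows "\<exists>q. j - i = ordm G H g * q \<and> a = b \<otimes> (g [^] ordm G H g) [^] q"
proof -
  have ac: "a \<in> carrier G" "b \<in> carrier G" using assms(4,5) subgroup.mem_carrier[OF assms(2)] by auto
  have "g [^] j = g [^] (j - i) \<otimes> g [^] i" using assms(3,7) by (simp add: nat_pow_mult)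
  then have "a \<otimes> g [^] i = (b \<otimes> g [^] (j - i)) \<otimes> g [^] i" using assms(6) ac assms(3) by (simp add: m_assoc)
  then have e: "a = b \<otimes> g [^] (j - i)" using ac assms(3) by simp
  then have "g [^] (j - i) = inv b \<otimes> a" using ac assms(3) by (simp add: inv_solve_left)
  moreover have "inv b \<otimes> a \<in> H" using assms(2,4,5) by (simp add: subgroup.m_closed subgroup.m_inv_closed)
  ultimately have "g [^] (j - i) \<in> H" by simp
  then obtain q where q: "j - i = ordm G H g * q" using ordm_dvd[OF assms(1-3)] by blast
  have "g [^] (j - i) = (g [^] ordm G H g) [^] q" using q assms(3) by (simp add: nat_pow_pow)
  then show ?thesis using e q by auto
qed

lemma Hg_card:
  assumes "finite (carrier G)" "subgroup H G" "g \<in> carrier G"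
  shows "card (Hg G H g) = ordm G H g * card H"
proof -
  define m where "m = ordm G H g"
  have m: "0 < m" "g [^] m \<in> H" using ordm_props[OF assms(1-3)] by (auto simp: m_def)
  have hc: "\<And>a. a \<in> H \<Longrightarrow> a \<in> carrier G" using subgroup.mem_carrier[OF assms(2)] by blast
  have bij: "bij_betw (\<lambda>(a, i). a \<otimes> g [^] i) (H \<times> {..<m}) (Hg G H g)"
  proof (rule bij_betw_imageI)
    show "inj_on (\<lambda>(a, i). a \<otimes> g [^] i) (H \<times> {..<m})"
    proof (rule inj_onI, clarify)
      fix a i b j assume a: "a \<in> H" "i < m" and b: "b \<in> H" "j < m" and eq: "a \<otimes> g [^] i = b \<otimes> g [^] j"
      have "i = j \<and> a = b"
      proof (cases "i \<le> j")
        case True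
        have "\<exists>q. j - i = m * q \<and> a = b \<otimes> (g [^] m) [^] q"
          using Hg_repr[OF assms a(1) b(1) eq True] by (simp only: m_def)
        then obtain q where q: "j - i = m * q" "a = b \<otimes> (g [^] m) [^] q" by blast
        have "q = 0"
        proof (rule ccontr)
          assume "q \<noteq> 0" then have "m \<le> m * q" by simp
          then show False using q(1) b(2) by linarith
        qed
        then show ?thesis using q True b hc by simp
      next
        case False
        have "\<exists>q. i - j = m * q \<and> b = a \<otimes> (g [^] m) [^] q"
          using Hg_repr[OF assms b(1) a(1) eq[symmetric]] False by (simp only: m_def)
        then obtain q where q: "i - j = m * q" "b = a \<otimes> (g [^] m) [^] q" by blast
        have "q = 0"
        proof (rule ccontr)
          assume "q \<noteq> 0" then have "m \<le> m * q" by simp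
          then show False using q(1) a(2) by linarith
        qed
        then show ?thesis using q False a hc by simp
      qed
      then show "a = b \<and> i = j" by simp
    qed
    show "(\<lambda>(a, i). a \<otimes> g [^] i) ` (H \<times> {..<m}) = Hg G H g"
    proof
      show "(\<lambda>(a, i). a \<otimes> g [^] i) ` (H \<times> {..<m}) \<subseteq> Hg G H g" unfolding Hg_def by auto
      show "Hg G H g \<subseteq> (\<lambda>(a, i). a \<otimes> g [^] i) ` (H \<times> {..<m})"
      proof
        fix y assume "y \<in> Hg G H g"
        then obtain a i where a: "a \<in> H" "y = a \<otimes> g [^] (i::nat)" unfolding Hg_def by blast
        define a' where "a' = a \<otimes> (g [^] m) [^] (i div m)"
        have a'H: "a' \<in> H" unfolding a'_def using a(1) sub_pow_closed[OF assms(2) m(2)] assms(2)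
          by (simp add: subgroup.m_closed)
        have "g [^] i = g [^] (m * (i div m)) \<otimes> g [^] (i mod m)" using assms(3) by (simp add: nat_pow_mult)
        also have "g [^] (m * (i div m)) = (g [^] m) [^] (i div m)" using assms(3) by (simp add: nat_pow_pow)
        finally have "y = a' \<otimes> g [^] (i mod m)" unfolding a'_def using a hc assms(3) by (simp add: m_assoc)
        moreover have "i mod m < m" using m(1) by simp
        ultimately show "y \<in> (\<lambda>(a, i). a \<otimes> g [^] i) ` (H \<times> {..<m})" using a'H by force
      qed
    qed
  qed
  have "card (Hg G H g) = card (H \<times> {..<m})" using bij_betw_same_card[OF bij] by simp
  also have "\<dots> = card H * m" by (simp add: card_cartesian_product)
  finally show ?thesis by (simp add: m_def)
qed

end

context comm_group
begin

lemma extc_wd: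
  assumes "finite (carrier G)" "subgroup H G" "g \<in> carrier G" "hchar G H \<chi>"
    and c: "c ^ ordm G H g = \<chi> (g [^] ordm G H g)"
    and "a \<in> H" "b \<in> H" "a \<otimes> g [^] (i::nat) = b \<otimes> g [^] (j::nat)"
  shows "\<chi> a * c ^ i = \<chi> b * c ^ j"
proof -
  define m where "m = ordm G H g"
  have m: "0 < m" "g [^] m \<in> H" using ordm_props[OF assms(1-3)] by (auto simp: m_def)
  have hc: "\<And>a. a \<in> H \<Longrightarrow> a \<in> carrier G" using subgroup.mem_carrier[OF assms(2)] by blast
  have key: "\<chi> a' * c ^ i' = \<chi> b' * c ^ j'"
    if "a' \<in> H" "b' \<in> H" "a' \<otimes> g [^] i' = b' \<otimes> g [^] j'" "i' \<le> j'" for a' b' i' j'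
  proof -
    have "\<exists>q. j' - i' = m * q \<and> a' = b' \<otimes> (g [^] m) [^] q"
      using Hg_repr[OF assms(1-3) that] by (simp only: m_def)
    then obtain q where q: "j' - i' = m * q" "a' = b' \<otimes> (g [^] m) [^] q" by blast
    have "\<chi> a' = \<chi> b' * \<chi> ((g [^] m) [^] q)"
      using q(2) hchar_mult[OF assms(4) that(2) sub_pow_closed[OF assms(2) m(2)]] by simp
    also have "\<chi> ((g [^] m) [^] q) = \<chi> (g [^] m) ^ q" using hchar_pow[OF assms(2,4) m(2)] .
    also have "\<chi> (g [^] m) = c ^ m" using c m_def by simp
    finally have "\<chi> a' = \<chi> b' * c ^ (j' - i')" using q(1) by (simp add: power_mult)
    then have "\<chi> a' * c ^ i' = \<chi> b' * (c ^ (j' - i') * c ^ i')" by simp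
    also have "c ^ (j' - i') * c ^ i' = c ^ j'" using that(4) by (simp add: power_add[symmetric])
    finally show ?thesis .
  qed
  show ?thesis
  proof (cases "i \<le> j")
    case True then show ?thesis using key[OF assms(6,7,8)] by simp
  next
    case False then show ?thesis using key[OF assms(7,6) assms(8)[symmetric]] by simp
  qed
qed

lemma extc_val:
  assumes "finite (carrier G)" "subgroup H G" "g \<in> carrier G" "hchar G H \<chi>"
    and c: "c ^ ordm G H g = \<chi> (g [^] ordm G H g)"
    and a: "a \<in> H"
  shows "extc G H g \<chi> c (a \<otimes> g [^] (i::nat)) = \<chi> a * c ^ i"
proof -
  let ?y = "a \<otimes> g [^] i"
  have yH: "?y \<in> Hg G H g" unfolding Hg_def using a by blast
  let ?P = "\<lambda>v. \<exists>a'\<in>H. \<exists>i'::nat. ?y = a' \<otimes> g [^] i' \<and> v = \<chi> a' * c ^ i'"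
  have ex: "?P (\<chi> a * c ^ i)" using a by blast
  have "?P (SOME v. ?P v)" using someI[of ?P, OF ex] .
  then obtain a' i' where a': "a' \<in> H" "?y = a' \<otimes> g [^] i'" "(SOME v. ?P v) = \<chi> a' * c ^ i'" by blast
  have "\<chi> a' * c ^ i' = \<chi> a * c ^ i" using extc_wd[OF assms(1-5) a'(1) a a'(2)[symmetric]] .
  then show ?thesis using yH a'(3) unfolding extc_def by simp
qed

lemma extc_props:
  assumes "finite (carrier G)" "subgroup H G" "g \<in> carrier G" "hchar G H \<chi>"
    and c: "c ^ ordm G H g = \<chi> (g [^] ordm G H g)"
  shows "hchar G (Hg G H g) (extc G H g \<chi> c)"
    and "\<And>x. x \<in> H \<Longrightarrow> extc G H g \<chi> c x = \<chi> x"
    and "extc G H g \<chi> c g = c"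
    and "c \<noteq> 0"
proof -
  define m where "m = ordm G H g"
  have m: "0 < m" "g [^] m \<in> H" using ordm_props[OF assms(1-3)] by (auto simp: m_def)
  have hc: "\<And>a. a \<in> H \<Longrightarrow> a \<in> carrier G" using subgroup.mem_carrier[OF assms(2)] by blast
  show cnz: "c \<noteq> 0"
  proof
    assume "c = 0"
    then have "\<chi> (g [^] m) = 0" using c m(1) m_def by (metis power_0_left not_gr0)
    then show False using hchar_nz[OF assms(4) m(2)] by simp
  qed
  show onH: "extc G H g \<chi> c x = \<chi> x" if x: "x \<in> H" for x
    using extc_val[OF assms x, of 0] x hc by simp
  have "extc G H g \<chi> c (\<one> \<otimes> g [^] (1::nat)) = \<chi> \<one> * c ^ 1"
    using extc_val[OF assms subgroup.one_closed[OF assms(2)]] .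
  then show "extc G H g \<chi> c g = c" using hchar_one[OF assms(2,4)] assms(3) by simp
  show "hchar G (Hg G H g) (extc G H g \<chi> c)"
    unfolding hchar_def
  proof (intro conjI ballI)
    show "extc G H g \<chi> c \<in> extensional (Hg G H g)" unfolding extc_def extensional_def by simp
  next
    fix y assume "y \<in> Hg G H g"
    then obtain a i where a: "a \<in> H" "y = a \<otimes> g [^] (i::nat)" unfolding Hg_def by blast
    show "extc G H g \<chi> c y \<noteq> 0" using extc_val[OF assms a(1)] a hchar_nz[OF assms(4) a(1)] cnz by simp
  next
    fix y z assume "y \<in> Hg G H g" "z \<in> Hg G H g"
    then obtain a i b j where a: "a \<in> H" "y = a \<otimes> g [^] (i::nat)" and b: "b \<in> H" "z = b \<otimes> g [^] (j::nat)"
      unfolding Hg_def by blast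
    have ab: "a \<otimes> b \<in> H" using a b assms(2) by (simp add: subgroup.m_closed)
    have "y \<otimes> z = (a \<otimes> b) \<otimes> g [^] (i + j)"
      using a b hc assms(3) by (simp add: m_ac nat_pow_mult[symmetric])
    then have "extc G H g \<chi> c (y \<otimes> z) = \<chi> (a \<otimes> b) * c ^ (i + j)"
      using extc_val[OF assms ab] by simp
    also have "\<dots> = (\<chi> a * c ^ i) * (\<chi> b * c ^ j)"
      using hchar_mult[OF assms(4) a(1) b(1)] by (simp add: power_add)
    finally show "extc G H g \<chi> c (y \<otimes> z) = extc G H g \<chi> c y * extc G H g \<chi> c z"
      using extc_val[OF assms a(1)] extc_val[OF assms b(1)] a b by simp
  qed
qed

end

context comm_group
begin

lemma ext_count:
  assumes fin: "finite (carrier G)" and "subgroup H G" "hchar G H \<chi>"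
  shows "card (Ext G H \<chi>) * card H = order G"
  using assms(2,3)
proof (induction "card (carrier G - H)" arbitrary: H \<chi> rule: less_induct)
  case less
  have hsub: "subgroup H G" "hchar G H \<chi>" by fact+
  show ?case
  proof (cases "H = carrier G")
    case True
    have "Ext G H \<chi> = {\<chi>}"
    proof
      show "Ext G H \<chi> \<subseteq> {\<chi>}"
      proof
        fix \<tau> assume "\<tau> \<in> Ext G H \<chi>"
        then have "rep G \<tau>" "\<forall>x\<in>H. \<tau> x = \<chi> x" unfolding Ext_def by auto
        then have "\<tau> = \<chi>" using hsub(2) True unfolding rep_def hchar_def
          by (intro extensionalityI[of \<tau> H \<chi>]) auto
        then show "\<tau> \<in> {\<chi>}" by simp
      qed
      show "{\<chi>} \<subseteq> Ext G H \<chi>" using hsub(2) True unfolding Ext_def by (simp add: rep_hchar)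
    qed
    then show ?thesis using True by (simp add: order_def)
  next
    case False
    obtain g where g: "g \<in> carrier G" "g \<notin> H" using subgroup.subset[OF hsub(1)] False by blast
    define m where "m = ordm G H g"
    have m: "0 < m" "g [^] m \<in> H" using ordm_props[OF fin hsub(1) g(1)] by (auto simp: m_def)
    define H' where "H' = Hg G H g"
    define C where "C = {c. c ^ m = \<chi> (g [^] m)}"
    have sub': "subgroup H' G" unfolding H'_def using Hg_subgroup[OF fin hsub(1) g(1)] .
    have cardH': "card H' = m * card H" unfolding H'_def m_def using Hg_card[OF fin hsub(1) g(1)] .
    have HH': "H \<subseteq> H'" "g \<in> H'" "H' \<subseteq> carrier G" unfolding H'_def using Hg_basic[OF hsub(1) g(1)] by auto
    have lt: "card (carrier G - H') < card (carrier G - H)"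
    proof (rule psubset_card_mono)
      show "finite (carrier G - H)" using fin by simp
      show "carrier G - H' \<subset> carrier G - H" using HH' g by blast
    qed
    have cprops: "hchar G H' (extc G H g \<chi> c)" "\<And>x. x \<in> H \<Longrightarrow> extc G H g \<chi> c x = \<chi> x"
        "extc G H g \<chi> c g = c" if "c \<in> C" for c
      using extc_props[OF fin hsub(1) g(1) hsub(2)] that unfolding C_def m_def H'_def by auto
    have IH: "card (Ext G H' (extc G H g \<chi> c)) * card H' = order G" if "c \<in> C" for c
      using less.hyps[OF lt sub' cprops(1)[OF that]] .
    have dec: "Ext G H \<chi> = (\<Union>c\<in>C. Ext G H' (extc G H g \<chi> c))"
    proof
      show "Ext G H \<chi> \<subseteq> (\<Union>c\<in>C. Ext G H' (extc G H g \<chi> c))"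
      proof
        fix \<tau> assume t: "\<tau> \<in> Ext G H \<chi>"
        then have rt: "rep G \<tau>" and tH: "\<forall>x\<in>H. \<tau> x = \<chi> x" unfolding Ext_def by auto
        have th: "hchar G (carrier G) \<tau>" using rt rep_hchar by blast
        have "\<tau> g ^ m = \<tau> (g [^] m)" using hchar_pow[OF subgroup_self th g(1)] by simp
        also have "\<dots> = \<chi> (g [^] m)" using tH m(2) by simp
        finally have cC: "\<tau> g \<in> C" unfolding C_def by simp
        have "\<forall>y\<in>H'. \<tau> y = extc G H g \<chi> (\<tau> g) y"
        proof
          fix y assume "y \<in> H'"
          then obtain a i where a: "a \<in> H" "y = a \<otimes> g [^] (i::nat)" unfolding H'_def Hg_def by blast
          have ac: "a \<in> carrier G" using a(1) subgroup.mem_carrier[OF hsub(1)] by blast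
          have "\<tau> y = \<tau> a * \<tau> (g [^] i)" using a hchar_mult[OF th ac] g(1) by simp
          also have "\<dots> = \<chi> a * \<tau> g ^ i" using tH a(1) hchar_pow[OF subgroup_self th g(1)] by simp
          also have "\<dots> = extc G H g \<chi> (\<tau> g) y"
            using extc_val[OF fin hsub(1) g(1) hsub(2) _ a(1)] cC a(2) unfolding C_def m_def by simp
          finally show "\<tau> y = extc G H g \<chi> (\<tau> g) y" .
        qed
        then have "\<tau> \<in> Ext G H' (extc G H g \<chi> (\<tau> g))" using rt unfolding Ext_def by simp
        then show "\<tau> \<in> (\<Union>c\<in>C. Ext G H' (extc G H g \<chi> c))" using cC by blast
      qed
      show "(\<Union>c\<in>C. Ext G H' (extc G H g \<chi> c)) \<subseteq> Ext G H \<chi>"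
        using cprops(2) HH'(1) unfolding Ext_def by fastforce
    qed
    have finC: "finite C" unfolding C_def using m(1) by (rule finite_nth_roots)
    have cardC: "card C = m" unfolding C_def
      using card_nth_roots[OF hchar_nz[OF hsub(2) m(2)] m(1)] .
    have finE: "finite (Ext G H' (extc G H g \<chi> c))" for c
      using finite_reps[OF fin] unfolding Ext_def by (rule finite_subset[rotated]) auto
    have disj: "\<forall>c\<in>C. \<forall>d\<in>C. c \<noteq> d \<longrightarrow> Ext G H' (extc G H g \<chi> c) \<inter> Ext G H' (extc G H g \<chi> d) = {}"
    proof (intro ballI impI)
      fix c d assume c: "c \<in> C" and d: "d \<in> C" and cd: "c \<noteq> d"
      show "Ext G H' (extc G H g \<chi> c) \<inter> Ext G H' (extc G H g \<chi> d) = {}"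
      proof (rule equals0I)
        fix \<tau> assume "\<tau> \<in> Ext G H' (extc G H g \<chi> c) \<inter> Ext G H' (extc G H g \<chi> d)"
        then have "\<tau> \<in> Ext G H' (extc G H g \<chi> c)" "\<tau> \<in> Ext G H' (extc G H g \<chi> d)" by simp_all
        then have t1: "\<forall>x\<in>H'. \<tau> x = extc G H g \<chi> c x" and t2: "\<forall>x\<in>H'. \<tau> x = extc G H g \<chi> d x"
          unfolding Ext_def by simp_all
        have "\<tau> g = c" using t1 HH'(2) cprops(3)[OF c] by simp
        moreover have "\<tau> g = d" using t2 HH'(2) cprops(3)[OF d] by simp
        ultimately show False using cd by simp
      qed
    qed
    have "card (Ext G H \<chi>) = (\<Sum>c\<in>C. card (Ext G H' (extc G H g \<chi> c)))"
      unfolding dec using finC finE disj by (intro card_UN_disjoint) auto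
    then have "card (Ext G H \<chi>) * card H' = (\<Sum>c\<in>C. card (Ext G H' (extc G H g \<chi> c)) * card H')"
      by (simp add: sum_distrib_right)
    also have "\<dots> = (\<Sum>c\<in>C. order G)" using IH by simp
    also have "\<dots> = m * order G" using cardC by simp
    finally have "m * (card (Ext G H \<chi>) * card H) = m * order G" using cardH' by (simp add: ac_simps)
    then show ?thesis using m(1) by simp
  qed
qed

end

context comm_group
begin

lemma lcancel: "x \<in> carrier G \<Longrightarrow> a \<in> carrier G \<Longrightarrow> b \<in> carrier G \<Longrightarrow> x \<otimes> a = x \<otimes> b \<Longrightarrow> a = b"
  by (metis m_comm right_cancel)

lemma rep_props:
  assumes "rep G \<tau>"
  shows "\<And>x y. x \<in> carrier G \<Longrightarrow> y \<in> carrier G \<Longrightarrow> \<tau> (x \<otimes> y) = \<tau> x * \<tau> y"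
    and "\<tau> \<one> = 1"
    and "\<And>x. x \<in> carrier G \<Longrightarrow> \<tau> x \<noteq> 0"
    and "\<And>x n. x \<in> carrier G \<Longrightarrow> \<tau> (x [^] (n::nat)) = \<tau> x ^ n"
    and "\<And>x. x \<in> carrier G \<Longrightarrow> \<tau> (inv x) = inverse (\<tau> x)"
    and "\<And>x. x \<notin> carrier G \<Longrightarrow> \<tau> x = undefined"
proof -
  have h: "hchar G (carrier G) \<tau>" using assms rep_hchar by blast
  show "\<And>x y. x \<in> carrier G \<Longrightarrow> y \<in> carrier G \<Longrightarrow> \<tau> (x \<otimes> y) = \<tau> x * \<tau> y" using hchar_mult[OF h] by blast
  show "\<tau> \<one> = 1" using hchar_one[OF subgroup_self h] .
  show "\<And>x. x \<in> carrier G \<Longrightarrow> \<tau> x \<noteq> 0" using hchar_nz[OF h] by blast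
  show "\<And>x n. x \<in> carrier G \<Longrightarrow> \<tau> (x [^] (n::nat)) = \<tau> x ^ n" using hchar_pow[OF subgroup_self h] by blast
  show "\<And>x. x \<in> carrier G \<Longrightarrow> \<tau> (inv x) = inverse (\<tau> x)" using hchar_inv[OF subgroup_self h] by blast
  show "\<And>x. x \<notin> carrier G \<Longrightarrow> \<tau> x = undefined" using assms unfolding rep_def extensional_def by blast
qed

lemma rep_ker_fiber:
  assumes fin: "finite (carrier G)" and r: "rep G \<tau>" and Q: "subgroup Q G" and KQ: "rker G \<tau> \<subseteq> Q"
  shows "card Q = card (rker G \<tau>) * card (\<tau> ` Q)"
proof (rule card_fibers)
  show "finite Q" using fin subgroup.subset[OF Q] finite_subset by blast
  fix v assume "v \<in> \<tau> ` Q"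
  then obtain y where y: "y \<in> Q" "v = \<tau> y" by blast
  have yc: "y \<in> carrier G" using y(1) subgroup.mem_carrier[OF Q] by blast
  have Kc: "rker G \<tau> \<subseteq> carrier G" unfolding rker_def by blast
  have "{x\<in>Q. \<tau> x = v} = (\<lambda>k. y \<otimes> k) ` rker G \<tau>"
  proof
    show "{x\<in>Q. \<tau> x = v} \<subseteq> (\<lambda>k. y \<otimes> k) ` rker G \<tau>"
    proof
      fix x assume x: "x \<in> {x\<in>Q. \<tau> x = v}"
      then have xc: "x \<in> carrier G" using subgroup.mem_carrier[OF Q] by blast
      have "\<tau> (inv y \<otimes> x) = inverse (\<tau> y) * \<tau> x" using rep_props[OF r] yc xc by simp
      also have "\<dots> = 1" using x y rep_props(3)[OF r yc] by simp
      finally have k: "inv y \<otimes> x \<in> rker G \<tau>" unfolding rker_def using xc yc by simp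
      have "x = y \<otimes> (inv y \<otimes> x)" using xc yc by (simp add: m_assoc[symmetric])
      then show "x \<in> (\<lambda>k. y \<otimes> k) ` rker G \<tau>" using k by blast
    qed
    show "(\<lambda>k. y \<otimes> k) ` rker G \<tau> \<subseteq> {x\<in>Q. \<tau> x = v}"
    proof
      fix x assume "x \<in> (\<lambda>k. y \<otimes> k) ` rker G \<tau>"
      then obtain k where k: "k \<in> rker G \<tau>" "x = y \<otimes> k" by blast
      have "k \<in> Q" using k KQ by blast
      then have "x \<in> Q" using k y Q by (simp add: subgroup.m_closed)
      moreover have "\<tau> x = v" using k y yc rep_props(1)[OF r] unfolding rker_def by auto
      ultimately show "x \<in> {x\<in>Q. \<tau> x = v}" by simp
    qed
  qed
  moreover have "inj_on (\<lambda>k. y \<otimes> k) (rker G \<tau>)"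
  proof (rule inj_onI)
    fix a b assume "a \<in> rker G \<tau>" "b \<in> rker G \<tau>" "y \<otimes> a = y \<otimes> b"
    then show "a = b" using lcancel[OF yc] Kc by blast
  qed
  ultimately show "card {x\<in>Q. \<tau> x = v} = card (rker G \<tau>)" by (simp add: card_image)
qed

lemma rep_image_card:
  assumes fin: "finite (carrier G)" and p: "prime p" and cardG: "card (carrier G) = p ^ e" and r: "rep G \<tau>"
  shows "card (\<tau> ` carrier G) = p ^ level G p \<tau>"
proof -
  have "card (carrier G) = card (rker G \<tau>) * card (\<tau> ` carrier G)"
    using rep_ker_fiber[OF fin r subgroup_self] unfolding rker_def by blast
  then have "card (\<tau> ` carrier G) dvd p ^ e" using cardG by (metis dvd_triv_right)
  then obtain j where j: "card (\<tau> ` carrier G) = p ^ j" using divides_primepow_nat[OF p] by blast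
  have p1: "1 < p" using p prime_gt_1_nat by blast
  have "level G p \<tau> = j" unfolding level_def
  proof (rule the_equality)
    show "card (\<tau> ` carrier G) = p ^ j" by fact
    fix k assume "card (\<tau> ` carrier G) = p ^ k" then show "k = j" using j p1 by simp
  qed
  then show ?thesis using j by simp
qed

lemma rep_level_pos:
  assumes fin: "finite (carrier G)" and p: "prime p" and cardG: "card (carrier G) = p ^ e" and r: "rep G \<tau>"
  shows "0 < level G p \<tau> \<longleftrightarrow> (\<exists>x\<in>carrier G. \<tau> x \<noteq> 1)"
proof -
  have c: "card (\<tau> ` carrier G) = p ^ level G p \<tau>" using rep_image_card[OF assms] .
  have p1: "1 < p" using p prime_gt_1_nat by blast
  have one: "1 \<in> \<tau> ` carrier G" using rep_props(2)[OF r] one_closed by force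
  have fi: "finite (\<tau> ` carrier G)" using fin by simp
  show ?thesis
  proof
    assume "0 < level G p \<tau>"
    then have "card (\<tau> ` carrier G) \<noteq> 1" using c p1 by (metis less_not_refl power_inject_exp power_0)
    then have "\<tau> ` carrier G \<noteq> {1}" by auto
    then show "\<exists>x\<in>carrier G. \<tau> x \<noteq> 1" using one by blast
  next
    assume "\<exists>x\<in>carrier G. \<tau> x \<noteq> 1"
    then obtain x where "x \<in> carrier G" "\<tau> x \<noteq> 1" by blast
    then have "{1, \<tau> x} \<subseteq> \<tau> ` carrier G" using one by blast
    then have "card {1, \<tau> x} \<le> card (\<tau> ` carrier G)" using fi by (rule card_mono[rotated])
    then have "2 \<le> p ^ level G p \<tau>" using c \<open>\<tau> x \<noteq> 1\<close> by simp
    then show "0 < level G p \<tau>" by (cases "level G p \<tau>") auto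
  qed
qed

end

lemma omega_pow: assumes "p > 0" shows "omega p ^ p = 1"
proof -
  have "omega p ^ p = exp (of_nat p * (2 * pi * \<i> / of_nat p))"
    unfolding omega_def by (rule exp_of_nat_mult[symmetric])
  also have "of_nat p * (2 * pi * \<i> / of_nat p) = 2 * of_real pi * \<i>" using assms by simp
  finally show ?thesis by simp
qed

lemma omega_ne1: assumes "p > 1" shows "omega p \<noteq> 1"
proof
  assume a: "omega p = 1"
  have o: "omega p = cis (2 * pi * real 1 / real p)" by (simp add: omega_def cis_conv_exp mult.commute)
  have inj: "inj_on (\<lambda>k. cis (2 * pi * real k / real p)) {..<p}"
    using bij_betw_roots_unity[of p] assms unfolding bij_betw_def by simp
  have "cis (2 * pi * real 1 / real p) = cis (2 * pi * real 0 / real p)" using a o by simp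
  then have "(1::nat) = 0" by (rule inj_onD[OF inj]) (use assms in auto)
  then show False by simp
qed

locale mainctx = comm_group G for G :: "('a, 'b) monoid_scheme" (structure) +
  fixes p e k :: nat and R :: "('a \<Rightarrow> complex) set" and \<rho> :: "'a \<Rightarrow> complex"
  assumes prime: "prime p" and fin: "finite (carrier G)" and cardG: "card (carrier G) = p ^ e"
    and cr: "chosen_reps G p R" and rhoR: "\<rho> \<in> R" and lev: "level G p \<rho> = k" and kpos: "k > 0"
begin

definition "S = {\<tau>. rep G \<tau> \<and> psi_rep G p \<tau> = \<rho>}"
definition "T = {\<tau>\<in>R. 0 < level G p \<tau> \<and> psi_rep G p \<tau> = \<rho>}"

lemma p1: "1 < p" using prime prime_gt_1_nat by blast
lemma p0: "0 < p" using p1 by simp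

lemma om: "omega p ^ p = 1" "omega p \<noteq> 1"
  using omega_pow[OF p0] omega_ne1[OF p1] by auto

lemma R_rep: "\<tau> \<in> R \<Longrightarrow> rep G \<tau>" using cr unfolding chosen_reps_def by blast

lemma rho_rep: "rep G \<rho>" using R_rep[OF rhoR] .

lemma psi_iff:
  assumes "rep G \<tau>"
  shows "psi_rep G p \<tau> = \<rho> \<longleftrightarrow> (\<forall>x\<in>carrier G. \<tau> (x [^] p) = \<rho> x)"
proof
  assume "psi_rep G p \<tau> = \<rho>"
  then show "\<forall>x\<in>carrier G. \<tau> (x [^] p) = \<rho> x" unfolding psi_rep_def by (metis restrict_apply')
next
  assume a: "\<forall>x\<in>carrier G. \<tau> (x [^] p) = \<rho> x"
  show "psi_rep G p \<tau> = \<rho>"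
  proof
    fix x show "psi_rep G p \<tau> x = \<rho> x"
      using a rep_props(6)[OF rho_rep] unfolding psi_rep_def by (cases "x \<in> carrier G") auto
  qed
qed

lemma S_iff: "\<tau> \<in> S \<longleftrightarrow> rep G \<tau> \<and> (\<forall>x\<in>carrier G. \<tau> (x [^] p) = \<rho> x)"
  unfolding S_def using psi_iff by blast

lemma S_finite: "finite S"
  using finite_reps[OF fin] unfolding S_def by (rule finite_subset[rotated]) auto

lemma rho_nontriv: "\<exists>x\<in>carrier G. \<rho> x \<noteq> 1"
  using rep_level_pos[OF fin prime cardG rho_rep] lev kpos by simp

lemma mu_p_in:
  assumes u: "u ^ p = 1"
  shows "\<exists>x\<in>carrier G. \<rho> x = u"
proof -
  obtain x0 where x0: "x0 \<in> carrier G" "\<rho> x0 \<noteq> 1" using rho_nontriv by blast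
  define z where "z = \<rho> x0"
  have zo: "z ^ (p ^ e) = 1" using rep_root[OF rho_rep x0(1)] cardG unfolding z_def order_def by simp
  define d where "d = (LEAST d. z ^ (p ^ d) = 1)"
  have zd: "z ^ (p ^ d) = 1" unfolding d_def using zo by (rule LeastI)
  have d0: "d \<noteq> 0" using zd x0(2) unfolding z_def by (cases d) auto
  have "\<not> z ^ (p ^ (d - 1)) = 1"
    using not_less_Least[of "d - 1" "\<lambda>d. z ^ (p ^ d) = 1"] d0 unfolding d_def by simp
  moreover have "(z ^ (p ^ (d - 1))) ^ p = 1"
  proof -
    have "(z ^ (p ^ (d - 1))) ^ p = z ^ (p ^ (d - 1) * p)" by (simp add: power_mult)
    also have "p ^ (d - 1) * p = p ^ d" using d0 by (cases d) auto
    finally show ?thesis using zd by simp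
  qed
  ultimately obtain i where "u = (z ^ (p ^ (d - 1))) ^ i"
    using pth_roots_powers[OF prime _ _ u] by blast
  then have "u = \<rho> (x0 [^] (p ^ (d - 1) * i))"
    using rep_props(4)[OF rho_rep x0(1)] unfolding z_def by (simp add: power_mult)
  then show ?thesis using x0(1) by blast
qed

lemma omega_in: "\<exists>x\<in>carrier G. \<rho> x = omega p" using mu_p_in om(1) by blast

end

context comm_group
begin
lemma same_ker_eq:
  assumes t: "rep G t" and r: "rep G \<tau>" and K: "rker G \<tau> = rker G t"
    and x: "x \<in> carrier G" and y: "y \<in> carrier G" and e: "t x = t y"
  shows "\<tau> x = \<tau> y"
proof -
  have "t (x \<otimes> inv y) = t x * inverse (t y)" using rep_props[OF t] x y by simp
  also have "\<dots> = 1" using e rep_props(3)[OF t y] by simp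
  finally have "x \<otimes> inv y \<in> rker G \<tau>" using K x y unfolding rker_def by simp
  then have "\<tau> x * inverse (\<tau> y) = 1" using rep_props[OF r] x y unfolding rker_def by simp
  then show ?thesis using rep_props(3)[OF r y] by (simp add: field_simps)
qed
end

context mainctx
begin

lemma S_b_inv:
  assumes t: "t \<in> S" and \<tau>: "\<tau> \<in> S" and K: "rker G \<tau> = rker G t"
  shows "b_elt G p \<tau> h = b_elt G p t h"
proof (cases "h \<in> carrier G")
  case False then show ?thesis unfolding b_elt_def by simp
next
  case True
  have rt: "rep G t" and r\<tau>: "rep G \<tau>" using t \<tau> S_iff by auto
  have one: "\<tau> h = 1 \<longleftrightarrow> t h = 1" using K True unfolding rker_def by blast
  have om1: "\<tau> h = omega p" if "t h = omega p" "t \<in> S" "\<tau> \<in> S" "rker G \<tau> = rker G t" for t \<tau>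
  proof -
    have rt: "rep G t" and r\<tau>: "rep G \<tau>" using that S_iff by auto
    obtain a where a: "a \<in> carrier G" "\<rho> a = omega p" using omega_in by blast
    have "t h = t (a [^] p)" using that(1,2) a S_iff by simp
    then have "\<tau> h = \<tau> (a [^] p)" using same_ker_eq[OF rt r\<tau> that(4) True] a(1) by simp
    then show ?thesis using that(3) a S_iff by simp
  qed
  have "\<tau> h = omega p \<longleftrightarrow> t h = omega p" using om1[OF _ t \<tau> K] om1[OF _ \<tau> t K[symmetric]] by blast
  then show ?thesis using one unfolding b_elt_def by simp
qed

lemma class_card:
  assumes t: "t \<in> S"
  shows "card {\<tau>\<in>S. rker G \<tau> = rker G t} = p"
proof -
  have rt: "rep G t" and tS: "\<forall>x\<in>carrier G. t (x [^] p) = \<rho> x" using t S_iff by auto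
  note tp = rep_props[OF rt]
  note rp = rep_props[OF rho_rep]
  define K where "K = rker G t"
  define Q where "Q = {x\<in>carrier G. t x \<in> \<rho> ` carrier G}"
  have Qsub: "subgroup Q G"
  proof (rule subgroupI)
    show "Q \<subseteq> carrier G" unfolding Q_def by blast
    have "t \<one> \<in> \<rho> ` carrier G" using tp(2) rp(2) one_closed by (metis image_eqI)
    then show "Q \<noteq> {}" unfolding Q_def using one_closed by blast
  next
    fix a assume "a \<in> Q"
    then obtain y where a: "a \<in> carrier G" "y \<in> carrier G" "t a = \<rho> y" unfolding Q_def by blast
    have "t (inv a) = \<rho> (inv y)" using a tp(5) rp(5) by simp
    then show "inv a \<in> Q" unfolding Q_def using a by (metis (mono_tags, lifting) image_eqI inv_closed mem_Collect_eq)
  next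
    fix a b assume "a \<in> Q" "b \<in> Q"
    then obtain y z where a: "a \<in> carrier G" "y \<in> carrier G" "t a = \<rho> y"
      and b: "b \<in> carrier G" "z \<in> carrier G" "t b = \<rho> z" unfolding Q_def by blast
    have "t (a \<otimes> b) = \<rho> (y \<otimes> z)" using a b tp(1) rp(1) by simp
    then show "a \<otimes> b \<in> Q" unfolding Q_def using a b by (metis (mono_tags, lifting) image_eqI m_closed mem_Collect_eq)
  qed
  have KQ: "rker G t \<subseteq> Q" unfolding Q_def rker_def using rp(2) one_closed by (force)
  have tQ: "t ` Q = \<rho> ` carrier G"
  proof
    show "t ` Q \<subseteq> \<rho> ` carrier G" unfolding Q_def by blast
    show "\<rho> ` carrier G \<subseteq> t ` Q"
    proof
      fix v assume "v \<in> \<rho> ` carrier G"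
      then obtain a where a: "a \<in> carrier G" "v = \<rho> a" by blast
      have "a [^] p \<in> Q" unfolding Q_def using a tS by auto
      then show "v \<in> t ` Q" using a tS by (metis image_eqI)
    qed
  qed
  have rhosub: "\<rho> ` carrier G \<subseteq> t ` carrier G" using tQ Q_def by blast
  have cQ: "card Q = card (rker G t) * card (\<rho> ` carrier G)"
    using rep_ker_fiber[OF fin rt Qsub KQ] tQ by simp
  have cG: "card (carrier G) = card (rker G t) * card (t ` carrier G)"
    using rep_ker_fiber[OF fin rt subgroup_self] unfolding rker_def by blast
  have ctG: "card (t ` carrier G) = p * card (\<rho> ` carrier G)"
  proof -
    have img: "(\<lambda>z. z ^ p) ` (t ` carrier G) = \<rho> ` carrier G"
    proof
      show "(\<lambda>z. z ^ p) ` (t ` carrier G) \<subseteq> \<rho> ` carrier G"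
        using tS tp(4) by (auto simp del: power_Suc)
      show "\<rho> ` carrier G \<subseteq> (\<lambda>z. z ^ p) ` (t ` carrier G)"
      proof
        fix v assume "v \<in> \<rho> ` carrier G"
        then obtain a where a: "a \<in> carrier G" "v = \<rho> a" by blast
        then have "v = (t a) ^ p" using tS tp(4) by simp
        then show "v \<in> (\<lambda>z. z ^ p) ` (t ` carrier G)" using a by blast
      qed
    qed
    have "card (t ` carrier G) = p * card ((\<lambda>z. z ^ p) ` (t ` carrier G))"
    proof (rule card_fibers)
      show "finite (t ` carrier G)" using fin by simp
      fix v assume "v \<in> (\<lambda>z. z ^ p) ` t ` carrier G"
      then obtain x0 where x0: "x0 \<in> carrier G" "v = (t x0) ^ p" by blast
      define z0 where "z0 = t x0"
      have z0: "z0 \<noteq> 0" using tp(3) x0 z0_def by simp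
      have "{z \<in> t ` carrier G. z ^ p = v} = (\<lambda>u. z0 * u) ` {u. u ^ p = 1}"
      proof
        show "{z \<in> t ` carrier G. z ^ p = v} \<subseteq> (\<lambda>u. z0 * u) ` {u. u ^ p = 1}"
        proof
          fix z assume "z \<in> {z \<in> t ` carrier G. z ^ p = v}"
          then have zz: "z ^ p = z0 ^ p" using x0 z0_def by simp
          have "(z / z0) ^ p = 1" using zz z0 by (simp add: power_divide)
          moreover have "z = z0 * (z / z0)" using z0 by simp
          ultimately show "z \<in> (\<lambda>u. z0 * u) ` {u. u ^ p = 1}" by blast
        qed
        show "(\<lambda>u. z0 * u) ` {u. u ^ p = 1} \<subseteq> {z \<in> t ` carrier G. z ^ p = v}"
        proof
          fix z assume "z \<in> (\<lambda>u. z0 * u) ` {u. u ^ p = 1}"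
          then obtain u where u: "u ^ p = 1" "z = z0 * u" by blast
          obtain a where a: "a \<in> carrier G" "\<rho> a = u" using mu_p_in[OF u(1)] by blast
          have "z = t (x0 \<otimes> a [^] p)" using u a x0 tp(1) tS z0_def by simp
          then have "z \<in> t ` carrier G" using x0 a by blast
          moreover have "z ^ p = v" using u x0 z0_def by (simp add: power_mult_distrib)
          ultimately show "z \<in> {z \<in> t ` carrier G. z ^ p = v}" by simp
        qed
      qed
      moreover have "inj_on (\<lambda>u. z0 * u) {u. u ^ p = 1}" using z0 by (auto intro: inj_onI)
      ultimately show "card {z \<in> t ` carrier G. z ^ p = v} = p"
        using card_roots_unity_eq[OF p0] by (simp add: card_image)
    qed
    then show ?thesis using img by simp
  qed
  have cardG': "card (carrier G) = p * card Q" using cQ cG ctG by simp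
  define one where "one = restrict (\<lambda>_. (1::complex)) Q"
  have hone: "hchar G Q one" unfolding one_def hchar_def using subgroup.m_closed[OF Qsub] by auto
  have cY: "card (Ext G Q one) * card Q = card (carrier G)"
    using ext_count[OF fin Qsub hone] unfolding order_def .
  have Qpos: "card Q > 0" using cardG' fin cardG p0 by (metis gr0I mult_0_right one_closed card_0_eq empty_iff)
  have cardY: "card (Ext G Q one) = p" using cY cardG' Qpos by simp
  define f where "f = (\<lambda>\<tau>. restrict (\<lambda>x. \<tau> x / t x) (carrier G))"
  define f' where "f' = (\<lambda>\<phi>. restrict (\<lambda>x. t x * \<phi> x) (carrier G))"
  have bij: "bij_betw f {\<tau>\<in>S. rker G \<tau> = rker G t} (Ext G Q one)"
  proof (rule bij_betw_byWitness[where f' = f'])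
    show "\<forall>\<tau>\<in>{\<tau>\<in>S. rker G \<tau> = rker G t}. f' (f \<tau>) = \<tau>"
    proof
      fix \<tau> assume "\<tau> \<in> {\<tau>\<in>S. rker G \<tau> = rker G t}"
      then have r: "rep G \<tau>" using S_iff by auto
      show "f' (f \<tau>) = \<tau>"
      proof
        fix x show "f' (f \<tau>) x = \<tau> x"
          unfolding f_def f'_def using rep_props(6)[OF r] tp(3) by (cases "x \<in> carrier G") auto
      qed
    qed
    show "\<forall>\<phi>\<in>Ext G Q one. f (f' \<phi>) = \<phi>"
    proof
      fix \<phi> assume "\<phi> \<in> Ext G Q one"
      then have r: "rep G \<phi>" unfolding Ext_def by simp
      show "f (f' \<phi>) = \<phi>"
      proof
        fix x show "f (f' \<phi>) x = \<phi> x"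
          unfolding f_def f'_def using rep_props(6)[OF r] tp(3) by (cases "x \<in> carrier G") auto
      qed
    qed
    show "f ` {\<tau>\<in>S. rker G \<tau> = rker G t} \<subseteq> Ext G Q one"
    proof
      fix \<phi> assume "\<phi> \<in> f ` {\<tau>\<in>S. rker G \<tau> = rker G t}"
      then obtain \<tau> where \<tau>: "\<tau> \<in> S" "rker G \<tau> = rker G t" "\<phi> = f \<tau>" by blast
      have r: "rep G \<tau>" and \<tau>S: "\<forall>x\<in>carrier G. \<tau> (x [^] p) = \<rho> x" using \<tau>(1) S_iff by auto
      note sp = rep_props[OF r]
      have "rep G \<phi>" unfolding rep_def \<tau>(3) f_def using sp(1,3) tp(1,3) by auto
      moreover have "\<forall>x\<in>Q. \<phi> x = one x"
      proof
        fix x assume "x \<in> Q"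
        then obtain a where a: "x \<in> carrier G" "a \<in> carrier G" "t x = \<rho> a" unfolding Q_def by blast
        have "t x = t (a [^] p)" using a tS by simp
        then have "\<tau> x = \<tau> (a [^] p)" using same_ker_eq[OF rt r \<tau>(2) a(1)] a(2) by simp
        then have "\<tau> x = t x" using a tS \<tau>S by simp
        then show "\<phi> x = one x" using \<open>x \<in> Q\<close> a(1) tp(3) unfolding \<tau>(3) f_def one_def by simp
      qed
      ultimately show "\<phi> \<in> Ext G Q one" unfolding Ext_def by simp
    qed
    show "f' ` Ext G Q one \<subseteq> {\<tau>\<in>S. rker G \<tau> = rker G t}"
    proof
      fix \<tau> assume "\<tau> \<in> f' ` Ext G Q one"
      then obtain \<phi> where \<phi>: "\<phi> \<in> Ext G Q one" "\<tau> = f' \<phi>" by blast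
      have r: "rep G \<phi>" and \<phi>Q: "\<forall>x\<in>Q. \<phi> x = 1" using \<phi>(1) unfolding Ext_def one_def by auto
      note sp = rep_props[OF r]
      have r\<tau>: "rep G \<tau>" unfolding rep_def \<phi>(2) f'_def using sp(1,3) tp(1,3) by auto
      have pQ: "x [^] p \<in> Q" if "x \<in> carrier G" for x unfolding Q_def using that tS by auto
      have "\<forall>x\<in>carrier G. \<tau> (x [^] p) = \<rho> x"
        using pQ \<phi>Q tS unfolding \<phi>(2) f'_def by simp
      then have "\<tau> \<in> S" using r\<tau> S_iff by simp
      moreover have "rker G \<tau> = rker G t"
      proof -
        have "\<tau> x = 1 \<longleftrightarrow> t x = 1" if x: "x \<in> carrier G" for x
        proof
          assume "t x = 1"
          then have "x \<in> Q" using KQ x unfolding rker_def by blast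
          then show "\<tau> x = 1" using \<phi>Q \<open>t x = 1\<close> x unfolding \<phi>(2) f'_def by simp
        next
          assume a: "\<tau> x = 1"
          then have e1: "t x * \<phi> x = 1" using x unfolding \<phi>(2) f'_def by simp
          have "\<phi> x ^ p = \<phi> (x [^] p)" using sp(4)[OF x] by simp
          also have "\<dots> = 1" using \<phi>Q pQ[OF x] by blast
          finally have "\<phi> x ^ p = 1" .
          then have "(t x * \<phi> x) ^ p = t x ^ p" by (simp add: power_mult_distrib)
          then have "t x ^ p = 1" using e1 by simp
          then obtain b where b: "b \<in> carrier G" "\<rho> b = t x" using mu_p_in by blast
          then have "x \<in> Q" unfolding Q_def using x by (metis (mono_tags, lifting) image_eqI mem_Collect_eq)
          then show "t x = 1" using e1 \<phi>Q by simp
        qed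
        then show ?thesis unfolding rker_def by blast
      qed
      ultimately show "\<tau> \<in> {\<tau>\<in>S. rker G \<tau> = rker G t}" by simp
    qed
  qed
  show ?thesis using bij_betw_same_card[OF bij] cardY by simp
qed

end

context mainctx
begin

definition "rr \<tau> = (THE \<tau>'. \<tau>' \<in> R \<and> rep_equiv G \<tau>' \<tau>)"

lemma rr_props:
  assumes "rep G \<tau>"
  shows "rr \<tau> \<in> R" "rep_equiv G (rr \<tau>) \<tau>" "\<And>t. t \<in> R \<Longrightarrow> rep_equiv G t \<tau> \<Longrightarrow> rr \<tau> = t"
proof -
  have ex: "\<exists>!\<tau>'. \<tau>' \<in> R \<and> rep_equiv G \<tau>' \<tau>" using cr assms unfolding chosen_reps_def by blast
  have "rr \<tau> \<in> R \<and> rep_equiv G (rr \<tau>) \<tau>" unfolding rr_def using theI'[OF ex] .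
  then show "rr \<tau> \<in> R" "rep_equiv G (rr \<tau>) \<tau>" by auto
  fix t assume "t \<in> R" "rep_equiv G t \<tau>"
  then show "rr \<tau> = t" unfolding rr_def using ex by (intro the1_equality) auto
qed

lemma T_sub_S: "T \<subseteq> S" unfolding T_def S_def using R_rep by auto

lemma T_finite: "finite T" using S_finite T_sub_S finite_subset by blast

lemma rr_T: assumes "\<tau> \<in> S" shows "rr \<tau> \<in> T"
proof -
  have r: "rep G \<tau>" and \<tau>S: "\<forall>x\<in>carrier G. \<tau> (x [^] p) = \<rho> x" using assms unfolding S_iff by simp_all
  define t where "t = rr \<tau>"
  have tR: "t \<in> R" using rr_props(1)[OF r] unfolding t_def .
  have K: "rker G t = rker G \<tau>" using rr_props(2)[OF r] unfolding t_def rep_equiv_def .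
  have rt: "rep G t" using R_rep[OF tR] .
  obtain x where x: "x \<in> carrier G" "\<rho> x \<noteq> 1" using rho_nontriv by blast
  have xp: "x [^] p \<in> carrier G" using x(1) by simp
  have "t (x [^] p) \<noteq> 1"
  proof
    assume "t (x [^] p) = 1"
    then have "x [^] p \<in> rker G t" using xp unfolding rker_def by simp
    then have "\<tau> (x [^] p) = 1" using K unfolding rker_def by simp
    then show False using x \<tau>S by simp
  qed
  then have lpos: "0 < level G p t" using rep_level_pos[OF fin prime cardG rt] xp by blast
  have "rker G (psi_rep G p t) = rker G \<rho>"
  proof -
    have "rker G (psi_rep G p t) = {x\<in>carrier G. t (x [^] p) = 1}" unfolding rker_def psi_rep_def by auto
    also have "\<dots> = {x\<in>carrier G. \<tau> (x [^] p) = 1}"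
    proof (rule Collect_cong)
      fix y show "(y \<in> carrier G \<and> t (y [^] p) = 1) = (y \<in> carrier G \<and> \<tau> (y [^] p) = 1)"
        using K unfolding rker_def by (metis (mono_tags, lifting) mem_Collect_eq nat_pow_closed)
    qed
    also have "\<dots> = rker G \<rho>" using \<tau>S unfolding rker_def by (intro Collect_cong) auto
    finally show ?thesis .
  qed
  then have "psi_rep G p t = \<rho>" using cr tR rhoR lpos unfolding chosen_reps_def rep_equiv_def by blast
  then show ?thesis using tR lpos unfolding T_def t_def by simp
qed

lemma sum_S_T: "(\<Sum>\<tau>\<in>S. b_elt G p \<tau> h) = (\<Sum>t\<in>T. int p * b_elt G p t h)"
proof -
  have "(\<Sum>\<tau>\<in>S. b_elt G p \<tau> h) = (\<Sum>t\<in>T. \<Sum>\<tau>\<in>{\<tau>\<in>S. rr \<tau> = t}. b_elt G p \<tau> h)"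
  proof -
    have "rr ` S \<subseteq> T" using rr_T by blast
    from sum.group[OF S_finite T_finite this, of "\<lambda>\<tau>. b_elt G p \<tau> h"] show ?thesis by simp
  qed
  also have "\<dots> = (\<Sum>t\<in>T. int p * b_elt G p t h)"
  proof (rule sum.cong[OF refl])
    fix t assume tT: "t \<in> T"
    have tS: "t \<in> S" using tT T_sub_S by blast
    have tR: "t \<in> R" using tT unfolding T_def by simp
    have eq: "{\<tau>\<in>S. rr \<tau> = t} = {\<tau>\<in>S. rker G \<tau> = rker G t}"
    proof -
      have "rr \<tau> = t \<longleftrightarrow> rker G \<tau> = rker G t" if "\<tau> \<in> S" for \<tau>
      proof -
        have r: "rep G \<tau>" using that unfolding S_iff by simp
        show ?thesis
        proof
          assume "rr \<tau> = t" then show "rker G \<tau> = rker G t" using rr_props(2)[OF r] unfolding rep_equiv_def by simp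
        next
          assume "rker G \<tau> = rker G t" then show "rr \<tau> = t" using rr_props(3)[OF r tR] unfolding rep_equiv_def by simp
        qed
      qed
      then show ?thesis by blast
    qed
    have "(\<Sum>\<tau>\<in>{\<tau>\<in>S. rker G \<tau> = rker G t}. b_elt G p \<tau> h) = (\<Sum>\<tau>\<in>{\<tau>\<in>S. rker G \<tau> = rker G t}. b_elt G p t h)"
      using S_b_inv[OF tS] by (intro sum.cong) auto
    also have "\<dots> = int p * b_elt G p t h" using class_card[OF tS] by simp
    finally show "(\<Sum>\<tau>\<in>{\<tau>\<in>S. rr \<tau> = t}. b_elt G p \<tau> h) = int p * b_elt G p t h" using eq by simp
  qed
  finally show ?thesis .
qed

end

lemma sum_ind_card: "finite A \<Longrightarrow> (\<Sum>x\<in>A. (if P x then 1 else 0)::int) = int (card {x\<in>A. P x})"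
  using sum.inter_filter[of A "\<lambda>_. 1::int" P] by simp

lemma sum_b_tau:
  assumes "finite A" "h \<in> carrier G"
  shows "(\<Sum>\<tau>\<in>A. b_elt G p \<tau> h) = int (card {\<tau>\<in>A. \<tau> h = 1}) - int (card {\<tau>\<in>A. \<tau> h = omega p})"
proof -
  have "(\<Sum>\<tau>\<in>A. b_elt G p \<tau> h) = (\<Sum>\<tau>\<in>A. (if \<tau> h = 1 then 1 else 0) - (if \<tau> h = omega p then 1 else 0))"
    using assms(2) unfolding b_elt_def by simp
  also have "\<dots> = int (card {\<tau>\<in>A. \<tau> h = 1}) - int (card {\<tau>\<in>A. \<tau> h = omega p})"
    using sum_ind_card[OF assms(1)] by (simp add: sum_subtractf)
  finally show ?thesis .
qed

lemma sum_b_g: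
  assumes "finite F" "F \<subseteq> carrier G"
  shows "(\<Sum>g\<in>F. b_elt G p \<sigma> g) = int (card {g\<in>F. \<sigma> g = 1}) - int (card {g\<in>F. \<sigma> g = omega p})"
proof -
  have "(\<Sum>g\<in>F. b_elt G p \<sigma> g) = (\<Sum>g\<in>F. (if \<sigma> g = 1 then 1 else 0) - (if \<sigma> g = omega p then 1 else 0))"
    using assms(2) unfolding b_elt_def by (intro sum.cong) auto
  also have "\<dots> = int (card {g\<in>F. \<sigma> g = 1}) - int (card {g\<in>F. \<sigma> g = omega p})"
    using sum_ind_card[OF assms(1)] by (simp add: sum_subtractf)
  finally show ?thesis .
qed

context comm_group
begin

lemma rep_times:
  assumes "rep G \<tau>" "rep G \<phi>"
  shows "rep G (restrict (\<lambda>x. \<tau> x * \<phi> x) (carrier G))"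
  using rep_props[OF assms(1)] rep_props[OF assms(2)] unfolding rep_def by auto

lemma rep_divide:
  assumes "rep G \<tau>" "rep G \<phi>"
  shows "rep G (restrict (\<lambda>x. \<tau> x / \<phi> x) (carrier G))"
  using rep_props[OF assms(1)] rep_props[OF assms(2)] unfolding rep_def by auto

end

context mainctx
begin

lemma caseA:
  assumes x0: "x0 \<in> carrier G" "x0 [^] p = \<one>" "\<rho> x0 \<noteq> 1"
  shows "S = {}" and "psi_grp G p (b_elt G p \<rho>) h = 0"
proof -
  note rp = rep_props[OF rho_rep]
  show "S = {}"
  proof (rule equals0I)
    fix \<tau> assume "\<tau> \<in> S"
    then have "rep G \<tau>" "\<forall>x\<in>carrier G. \<tau> (x [^] p) = \<rho> x" unfolding S_iff by simp_all
    then have "\<rho> x0 = 1" using x0 rep_props(2) by metis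
    then show False using x0 by simp
  qed
  define w where "w = \<rho> x0"
  have wp: "w ^ p = 1" using rp(4)[OF x0(1)] x0(2) rp(2) unfolding w_def by metis
  have "w \<noteq> 1" using x0(3) w_def by simp
  then obtain j where j: "omega p = w ^ j" using pth_roots_powers[OF prime wp _ om(1)] by blast
  define y where "y = x0 [^] j"
  have yc: "y \<in> carrier G" unfolding y_def using x0(1) by simp
  have ry: "\<rho> y = omega p" unfolding y_def using rp(4)[OF x0(1)] j w_def by simp
  have yp: "y [^] p = \<one>"
  proof -
    have "y [^] p = x0 [^] (j * p)" unfolding y_def using x0(1) by (simp add: nat_pow_pow)
    also have "\<dots> = (x0 [^] p) [^] j" using x0(1) by (simp add: nat_pow_pow mult.commute)
    finally show ?thesis using x0(2) by simp
  qed
  define F where "F = {g\<in>carrier G. g [^] p = h}"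
  have Ffin: "finite F" unfolding F_def using fin by simp
  have Fsub: "F \<subseteq> carrier G" unfolding F_def by blast
  have om0: "omega p \<noteq> 0" using om(1) p0 by (metis power_0_left zero_neq_one neq0_conv)
  have bij: "bij_betw (\<lambda>g. g \<otimes> y) {g\<in>F. \<rho> g = 1} {g\<in>F. \<rho> g = omega p}"
  proof (rule bij_betw_byWitness[where f' = "\<lambda>g. g \<otimes> inv y"])
    show "\<forall>a\<in>{g\<in>F. \<rho> g = 1}. a \<otimes> y \<otimes> inv y = a" using yc Fsub by (auto simp: m_assoc)
    show "\<forall>a\<in>{g\<in>F. \<rho> g = omega p}. a \<otimes> inv y \<otimes> y = a" using yc Fsub by (auto simp: m_assoc)
    show "(\<lambda>g. g \<otimes> y) ` {g\<in>F. \<rho> g = 1} \<subseteq> {g\<in>F. \<rho> g = omega p}"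
    proof
      fix z assume "z \<in> (\<lambda>g. g \<otimes> y) ` {g\<in>F. \<rho> g = 1}"
      then obtain g where g: "g \<in> carrier G" "g [^] p = h" "\<rho> g = 1" "z = g \<otimes> y" unfolding F_def by blast
      have "z [^] p = g [^] p \<otimes> y [^] p" using g yc by (simp add: nat_pow_distrib)
      then have "z [^] p = g [^] p" using g(1) yp by simp
      then have "z [^] p = h" using g(2) by simp
      moreover have "\<rho> z = omega p" using g yc ry rp(1) by simp
      ultimately show "z \<in> {g\<in>F. \<rho> g = omega p}" unfolding F_def using g yc by simp
    qed
    show "(\<lambda>g. g \<otimes> inv y) ` {g\<in>F. \<rho> g = omega p} \<subseteq> {g\<in>F. \<rho> g = 1}"
    proof
      fix z assume "z \<in> (\<lambda>g. g \<otimes> inv y) ` {g\<in>F. \<rho> g = omega p}"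
      then obtain g where g: "g \<in> carrier G" "g [^] p = h" "\<rho> g = omega p" "z = g \<otimes> inv y" unfolding F_def by blast
      have "z [^] p = g [^] p \<otimes> inv (y [^] p)" using g yc by (simp add: nat_pow_distrib nat_pow_inv)
      then have "z [^] p = g [^] p" using g(1) yp by simp
      then have "z [^] p = h" using g(2) by simp
      moreover have "\<rho> z = 1" using g yc ry rp(1) rp(5) om0 by simp
      ultimately show "z \<in> {g\<in>F. \<rho> g = 1}" unfolding F_def using g yc by simp
    qed
  qed
  have "psi_grp G p (b_elt G p \<rho>) h = (\<Sum>g\<in>F. b_elt G p \<rho> g)" unfolding psi_grp_def F_def by simp
  also have "\<dots> = int (card {g\<in>F. \<rho> g = 1}) - int (card {g\<in>F. \<rho> g = omega p})"
    using sum_b_g[OF Ffin Fsub] .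
  also have "\<dots> = 0" using bij_betw_same_card[OF bij] by simp
  finally show "psi_grp G p (b_elt G p \<rho>) h = 0" .
qed

end

context mainctx
begin

definition "Gp = (\<lambda>x. x [^] p) ` carrier G"
definition "Tor = {x\<in>carrier G. x [^] p = \<one>}"
definition "chiB = restrict (\<lambda>y. \<rho> (SOME x. x \<in> carrier G \<and> x [^] p = y)) Gp"

lemma Gp_sub: "subgroup Gp G"
proof (rule subgroupI)
  show "Gp \<subseteq> carrier G" unfolding Gp_def by auto
  show "Gp \<noteq> {}" unfolding Gp_def using one_closed by blast
next
  fix a assume "a \<in> Gp"
  then obtain x where x: "x \<in> carrier G" "a = x [^] p" unfolding Gp_def by blast
  then have "inv a = (inv x) [^] p" by (simp add: nat_pow_inv)
  then show "inv a \<in> Gp" unfolding Gp_def using x(1) by blast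
next
  fix a b assume "a \<in> Gp" "b \<in> Gp"
  then obtain x y where x: "x \<in> carrier G" "a = x [^] p" and y: "y \<in> carrier G" "b = y [^] p"
    unfolding Gp_def by blast
  then have "a \<otimes> b = (x \<otimes> y) [^] p" by (simp add: nat_pow_distrib)
  then show "a \<otimes> b \<in> Gp" unfolding Gp_def using x y by blast
qed

lemma fiber_Tor:
  assumes x0: "x0 \<in> carrier G"
  shows "{x\<in>carrier G. x [^] p = x0 [^] p} = (\<lambda>t. x0 \<otimes> t) ` Tor"
    and "card {x\<in>carrier G. x [^] p = x0 [^] p} = card Tor"
proof -
  show e: "{x\<in>carrier G. x [^] p = x0 [^] p} = (\<lambda>t. x0 \<otimes> t) ` Tor"
  proof
    show "{x\<in>carrier G. x [^] p = x0 [^] p} \<subseteq> (\<lambda>t. x0 \<otimes> t) ` Tor"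
    proof
      fix x assume x: "x \<in> {x\<in>carrier G. x [^] p = x0 [^] p}"
      then have xc: "x \<in> carrier G" by simp
      have "(inv x0 \<otimes> x) [^] p = inv (x0 [^] p) \<otimes> x [^] p" using xc x0 by (simp add: nat_pow_distrib nat_pow_inv)
      also have "\<dots> = \<one>" using x x0 by simp
      finally have "inv x0 \<otimes> x \<in> Tor" unfolding Tor_def using xc x0 by simp
      moreover have "x = x0 \<otimes> (inv x0 \<otimes> x)" using xc x0 by (simp add: m_assoc[symmetric])
      ultimately show "x \<in> (\<lambda>t. x0 \<otimes> t) ` Tor" by blast
    qed
    show "(\<lambda>t. x0 \<otimes> t) ` Tor \<subseteq> {x\<in>carrier G. x [^] p = x0 [^] p}"
      using x0 unfolding Tor_def by (auto simp: nat_pow_distrib)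
  qed
  have "inj_on (\<lambda>t. x0 \<otimes> t) Tor"
  proof (rule inj_onI)
    fix a b assume "a \<in> Tor" "b \<in> Tor" "x0 \<otimes> a = x0 \<otimes> b"
    then show "a = b" using lcancel[OF x0] unfolding Tor_def by blast
  qed
  then show "card {x\<in>carrier G. x [^] p = x0 [^] p} = card Tor" using e by (simp add: card_image)
qed

lemma card_G_Tor: "card (carrier G) = card Tor * card Gp"
proof -
  have "card (carrier G) = card Tor * card ((\<lambda>x. x [^] p) ` carrier G)"
  proof (rule card_fibers)
    show "finite (carrier G)" using fin .
    fix v assume "v \<in> (\<lambda>x. x [^] p) ` carrier G"
    then obtain x0 where "x0 \<in> carrier G" "v = x0 [^] p" by blast
    then show "card {x\<in>carrier G. x [^] p = v} = card Tor" using fiber_Tor by simp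
  qed
  then show ?thesis unfolding Gp_def .
qed

context
  assumes B: "\<forall>x\<in>carrier G. x [^] p = \<one> \<longrightarrow> \<rho> x = 1"
begin

lemma B_wd:
  assumes "x \<in> carrier G" "x' \<in> carrier G" "x [^] p = x' [^] p"
  shows "\<rho> x = \<rho> x'"
proof -
  note rp = rep_props[OF rho_rep]
  have "(x \<otimes> inv x') [^] p = x [^] p \<otimes> inv (x' [^] p)" using assms by (simp add: nat_pow_distrib nat_pow_inv)
  also have "\<dots> = \<one>" using assms by simp
  finally have "\<rho> (x \<otimes> inv x') = 1" using B assms by simp
  then have "\<rho> x * inverse (\<rho> x') = 1" using rp assms by simp
  then show ?thesis using rp(3)[OF assms(2)] by (simp add: field_simps)
qed

lemma chiB_val: assumes "x \<in> carrier G" shows "chiB (x [^] p) = \<rho> x"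
proof -
  let ?P = "\<lambda>z. z \<in> carrier G \<and> z [^] p = x [^] p"
  have "?P (SOME z. ?P z)" using someI[of ?P x] assms by blast
  then have "\<rho> (SOME z. ?P z) = \<rho> x" using B_wd assms by blast
  moreover have "x [^] p \<in> Gp" unfolding Gp_def using assms by blast
  ultimately show ?thesis unfolding chiB_def by simp
qed

lemma chiB_hchar: "hchar G Gp chiB"
  unfolding hchar_def
proof (intro conjI ballI)
  show "chiB \<in> extensional Gp" unfolding chiB_def by simp
next
  fix y assume "y \<in> Gp"
  then obtain x where x: "x \<in> carrier G" "y = x [^] p" unfolding Gp_def by blast
  then show "chiB y \<noteq> 0" using chiB_val rep_props(3)[OF rho_rep] by simp
next
  fix y z assume "y \<in> Gp" "z \<in> Gp"
  then obtain x x' where x: "x \<in> carrier G" "y = x [^] p" and x': "x' \<in> carrier G" "z = x' [^] p"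
    unfolding Gp_def by blast
  have "y \<otimes> z = (x \<otimes> x') [^] p" using x x' by (simp add: nat_pow_distrib)
  then show "chiB (y \<otimes> z) = chiB y * chiB z" using x x' chiB_val rep_props(1)[OF rho_rep] by simp
qed

lemma S_Ext: "S = Ext G Gp chiB"
proof -
  have "\<tau> \<in> S \<longleftrightarrow> \<tau> \<in> Ext G Gp chiB" for \<tau>
  proof -
    have "(\<forall>x\<in>carrier G. \<tau> (x [^] p) = \<rho> x) \<longleftrightarrow> (\<forall>y\<in>Gp. \<tau> y = chiB y)"
      unfolding Gp_def using chiB_val by auto
    then show ?thesis unfolding S_iff Ext_def by simp
  qed
  then show ?thesis by blast
qed

lemma card_S: "card S = card Tor"
proof -
  have "card S * card Gp = card (carrier G)"
    using ext_count[OF fin Gp_sub chiB_hchar] S_Ext unfolding order_def by simp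
  moreover have "card Gp > 0"
    using Gp_sub fin subgroup.finite_imp_card_positive by blast
  ultimately show ?thesis using card_G_Tor by simp
qed

end

end

context mainctx
begin

lemma phi_exists:
  assumes hc: "h \<in> carrier G" and hG: "h \<notin> Gp"
  shows "\<exists>\<phi>. rep G \<phi> \<and> (\<forall>y\<in>Gp. \<phi> y = 1) \<and> \<phi> h = omega p"
proof -
  define m where "m = ordm G Gp h"
  have hp: "h [^] p \<in> Gp" unfolding Gp_def using hc by blast
  have mdvd: "m dvd p" unfolding m_def using ordm_dvd[OF fin Gp_sub hc hp] .
  have mpr: "0 < m" "h [^] m \<in> Gp" using ordm_props[OF fin Gp_sub hc] unfolding m_def by auto
  have "m \<noteq> 1" using mpr(2) hG hc by auto
  then have mp: "m = p" using mdvd prime unfolding prime_nat_iff by blast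
  define one where "one = restrict (\<lambda>_. (1::complex)) Gp"
  have hone: "hchar G Gp one" unfolding one_def hchar_def using subgroup.m_closed[OF Gp_sub] by auto
  have c: "omega p ^ ordm G Gp h = one (h [^] ordm G Gp h)"
    using om(1) mp mpr(2) unfolding m_def one_def by simp
  note ep = extc_props[OF fin Gp_sub hc hone c]
  define H' where "H' = Hg G Gp h"
  have sub': "subgroup H' G" unfolding H'_def using Hg_subgroup[OF fin Gp_sub hc] .
  have HH': "Gp \<subseteq> H'" "h \<in> H'" unfolding H'_def using Hg_basic[OF Gp_sub hc] by auto
  have "card (Ext G H' (extc G Gp h one (omega p))) * card H' = order G"
    using ext_count[OF fin sub' ep(1)[folded H'_def]] .
  moreover have "order G > 0" unfolding order_def using fin one_closed by (auto simp: card_gt_0_iff)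
  ultimately have "Ext G H' (extc G Gp h one (omega p)) \<noteq> {}" by (metis card.empty gr_implies_not0 mult_0)
  then obtain \<phi> where \<phi>: "\<phi> \<in> Ext G H' (extc G Gp h one (omega p))" by blast
  then have r: "rep G \<phi>" and \<phi>H: "\<forall>y\<in>H'. \<phi> y = extc G Gp h one (omega p) y" unfolding Ext_def by auto
  have "\<forall>y\<in>Gp. \<phi> y = 1"
  proof
    fix y assume y: "y \<in> Gp"
    then have "\<phi> y = extc G Gp h one (omega p) y" using \<phi>H HH'(1) by blast
    also have "\<dots> = one y" using ep(2) y by blast
    also have "\<dots> = 1" using y unfolding one_def by simp
    finally show "\<phi> y = 1" .
  qed
  moreover have "\<phi> h = omega p" using \<phi>H HH'(2) ep(3) by simp
  ultimately show ?thesis using r by blast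
qed

context
  assumes B: "\<forall>x\<in>carrier G. x [^] p = \<one> \<longrightarrow> \<rho> x = 1"
begin

lemma orthoB: "psi_grp G p (b_elt G p \<rho>) h = (\<Sum>\<tau>\<in>S. b_elt G p \<tau> h)"
proof (cases "h \<in> Gp")
  case True
  then obtain x0 where x0: "x0 \<in> carrier G" "h = x0 [^] p" unfolding Gp_def by blast
  have hc: "h \<in> carrier G" using x0 by simp
  define F where "F = {g\<in>carrier G. g [^] p = h}"
  have cF: "card F = card Tor" unfolding F_def using fiber_Tor(2)[OF x0(1)] x0(2) by simp
  have "psi_grp G p (b_elt G p \<rho>) h = (\<Sum>g\<in>F. b_elt G p \<rho> g)" unfolding psi_grp_def F_def by simp
  also have "\<dots> = (\<Sum>g\<in>F. b_elt G p \<rho> x0)"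
  proof (rule sum.cong[OF refl])
    fix g assume "g \<in> F"
    then have g: "g \<in> carrier G" "g [^] p = x0 [^] p" unfolding F_def using x0 by auto
    then have "\<rho> g = \<rho> x0" using B_wd[OF B g(1) x0(1)] by simp
    then show "b_elt G p \<rho> g = b_elt G p \<rho> x0" unfolding b_elt_def using g x0 by simp
  qed
  also have "\<dots> = int (card Tor) * b_elt G p \<rho> x0" using cF by simp
  also have "\<dots> = (\<Sum>\<tau>\<in>S. b_elt G p \<rho> x0)" using card_S[OF B] by simp
  also have "\<dots> = (\<Sum>\<tau>\<in>S. b_elt G p \<tau> h)"
  proof (rule sum.cong[OF refl])
    fix \<tau> assume "\<tau> \<in> S"
    then have "\<tau> h = \<rho> x0" using x0 unfolding S_iff by simp
    then show "b_elt G p \<rho> x0 = b_elt G p \<tau> h" unfolding b_elt_def using hc x0 by simp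
  qed
  finally show ?thesis .
next
  case False
  have F0: "{g\<in>carrier G. g [^] p = h} = {}" using False unfolding Gp_def by blast
  have lhs: "psi_grp G p (b_elt G p \<rho>) h = 0" unfolding psi_grp_def F0 by simp
  show ?thesis
  proof (cases "h \<in> carrier G")
    case False
    then show ?thesis using lhs unfolding b_elt_def by simp
  next
    case hc: True
    obtain \<phi> where \<phi>: "rep G \<phi>" "\<forall>y\<in>Gp. \<phi> y = 1" "\<phi> h = omega p"
      using phi_exists[OF hc False] by blast
    note fp = rep_props[OF \<phi>(1)]
    have \<phi>p: "\<phi> (x [^] p) = 1" if "x \<in> carrier G" for x using \<phi>(2) that unfolding Gp_def by blast
    have om0: "omega p \<noteq> 0" using om(1) p0 by (metis power_0_left zero_neq_one neq0_conv)
    define f where "f = (\<lambda>\<tau>. restrict (\<lambda>x. \<tau> x * \<phi> x) (carrier G))"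
    define f' where "f' = (\<lambda>\<tau>. restrict (\<lambda>x. \<tau> x / \<phi> x) (carrier G))"
    have bij: "bij_betw f {\<tau>\<in>S. \<tau> h = 1} {\<tau>\<in>S. \<tau> h = omega p}"
    proof (rule bij_betw_byWitness[where f' = f'])
      show "\<forall>\<tau>\<in>{\<tau>\<in>S. \<tau> h = 1}. f' (f \<tau>) = \<tau>"
      proof
        fix \<tau> assume "\<tau> \<in> {\<tau>\<in>S. \<tau> h = 1}"
        then have r: "rep G \<tau>" unfolding S_iff by simp
        show "f' (f \<tau>) = \<tau>"
        proof
          fix x show "f' (f \<tau>) x = \<tau> x"
            unfolding f_def f'_def using rep_props(6)[OF r] fp(3) by (cases "x \<in> carrier G") auto
        qed
      qed
      show "\<forall>\<tau>\<in>{\<tau>\<in>S. \<tau> h = omega p}. f (f' \<tau>) = \<tau>"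
      proof
        fix \<tau> assume "\<tau> \<in> {\<tau>\<in>S. \<tau> h = omega p}"
        then have r: "rep G \<tau>" unfolding S_iff by simp
        show "f (f' \<tau>) = \<tau>"
        proof
          fix x show "f (f' \<tau>) x = \<tau> x"
            unfolding f_def f'_def using rep_props(6)[OF r] fp(3) by (cases "x \<in> carrier G") auto
        qed
      qed
      show "f ` {\<tau>\<in>S. \<tau> h = 1} \<subseteq> {\<tau>\<in>S. \<tau> h = omega p}"
      proof
        fix \<sigma> assume "\<sigma> \<in> f ` {\<tau>\<in>S. \<tau> h = 1}"
        then obtain \<tau> where \<tau>: "\<tau> \<in> S" "\<tau> h = 1" "\<sigma> = f \<tau>" by blast
        have r: "rep G \<tau>" and \<tau>S: "\<forall>x\<in>carrier G. \<tau> (x [^] p) = \<rho> x" using \<tau>(1) unfolding S_iff by simp_all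
        have "rep G \<sigma>" unfolding \<tau>(3) f_def using rep_times[OF r \<phi>(1)] .
        moreover have "\<forall>x\<in>carrier G. \<sigma> (x [^] p) = \<rho> x" unfolding \<tau>(3) f_def using \<tau>S \<phi>p by simp
        moreover have "\<sigma> h = omega p" unfolding \<tau>(3) f_def using hc \<tau>(2) \<phi>(3) by simp
        ultimately show "\<sigma> \<in> {\<tau>\<in>S. \<tau> h = omega p}" unfolding S_iff by simp
      qed
      show "f' ` {\<tau>\<in>S. \<tau> h = omega p} \<subseteq> {\<tau>\<in>S. \<tau> h = 1}"
      proof
        fix \<sigma> assume "\<sigma> \<in> f' ` {\<tau>\<in>S. \<tau> h = omega p}"
        then obtain \<tau> where \<tau>: "\<tau> \<in> S" "\<tau> h = omega p" "\<sigma> = f' \<tau>" by blast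
        have r: "rep G \<tau>" and \<tau>S: "\<forall>x\<in>carrier G. \<tau> (x [^] p) = \<rho> x" using \<tau>(1) unfolding S_iff by simp_all
        have "rep G \<sigma>" unfolding \<tau>(3) f'_def using rep_divide[OF r \<phi>(1)] .
        moreover have "\<forall>x\<in>carrier G. \<sigma> (x [^] p) = \<rho> x" unfolding \<tau>(3) f'_def using \<tau>S \<phi>p by simp
        moreover have "\<sigma> h = 1" unfolding \<tau>(3) f'_def using hc \<tau>(2) \<phi>(3) om0 by simp
        ultimately show "\<sigma> \<in> {\<tau>\<in>S. \<tau> h = 1}" unfolding S_iff by simp
      qed
    qed
    have "(\<Sum>\<tau>\<in>S. b_elt G p \<tau> h) = int (card {\<tau>\<in>S. \<tau> h = 1}) - int (card {\<tau>\<in>S. \<tau> h = omega p})"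
      using sum_b_tau[OF S_finite hc] .
    also have "\<dots> = 0" using bij_betw_same_card[OF bij] by simp
    finally show ?thesis using lhs by simp
  qed
qed

end

lemma ortho: "psi_grp G p (b_elt G p \<rho>) h = (\<Sum>\<tau>\<in>S. b_elt G p \<tau> h)"
proof (cases "\<forall>x\<in>carrier G. x [^] p = \<one> \<longrightarrow> \<rho> x = 1")
  case True then show ?thesis using orthoB by blast
next
  case False
  then obtain x0 where "x0 \<in> carrier G" "x0 [^] p = \<one>" "\<rho> x0 \<noteq> 1" by blast
  then show ?thesis using caseA by simp
qed

lemma main: "psi_grp G p (b_elt G p \<rho>) = (\<lambda>x. \<Sum>\<tau>\<in>T. int p * b_elt G p \<tau> x)"
proof
  fix h show "psi_grp G p (b_elt G p \<rho>) h = (\<Sum>\<tau>\<in>T. int p * b_elt G p \<tau> h)"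
    using ortho sum_S_T by simp
qed

end

theorem mainTheorem5:
  fixes G :: "('a, 'b) monoid_scheme" and p e k :: nat and R :: "('a \<Rightarrow> complex) set"
    and \<rho> :: "'a \<Rightarrow> complex"
  assumes "prime (p::nat)" and "e \<ge> 1"
    and "comm_group G" and "finite (carrier G)" and "card (carrier G) = p ^ e"
    and "chosen_reps G p R"
    and "\<rho> \<in> R" and "level G p \<rho> = k" and "k > 0"
  shows "psi_grp G p (b_elt G p \<rho>) =
    (\<lambda>x. \<Sum>\<tau>\<in>{\<tau> \<in> R. level G p \<tau> > 0 \<and> psi_rep G p \<tau> = \<rho>}. int p * b_elt G p \<tau> x)"
proof -
  interpret M: mainctx G p e k R \<rho>
    using assms by (intro mainctx.intro mainctx_axioms.intro) auto
  show ?thesis using M.main unfolding M.T_def .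
qed

end
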